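(* Let $p\ge 3$ and let $T$ be a tree with colour classes $A,B$, $|A|\le|B|$. Let $k=\delta(A)=\min\{d_T(x):x\in A\}$ and assume $k\ge 2$; let $A_0=\{x\in A:d_T(x)=k\}$, $B_0=\{y\in B:|N_T(y)\cap A_0|\ge2\}$, $a=|A|$, and when $B_0\ne\emptyset$ let $b+2=\min\{d_T(y):y\in B_0\}$. Then: (1) if $k$ is even, all graphs in $\mathcal{H}_1(n,p,a,k)\cup\mathcal{H}_2(n,p,a,k)$ are $T^{p+1}$-free; (2) if $k$ is odd and $B_0=\emptyset$, all graphs in $\mathcal{H}_2(n,p,a,k)$ are $T^{p+1}$-free; (3) if $k$ is odd, $B_0\ne\emptyset$ and ($b=0$ or $0<b<a-1-\lceil\frac{k-1}{a-1}\rceil$), all graphs in $\mathcal{H}_1(n,p,a,k)$ are $T^{p+1}$-free; (4) if $k$ is odd, $B_0\neq\emptyset$ and $b>\max\{0,a-1-\lceil\frac{k-1}{a-1}\rceil\}$, all graphs in $\mathcal{H}_2(n,p,a,b-1,k)$ are $T^{p+1}$-free; (5) if $k$ is odd, $B_0\ne\emptyset$ and $b=a-1-\lceil\frac{k-1}{a-1}\rceil>0$, all graphs in $\mathcal{H}_1(n,p,a,k)\cup\mathcal{H}_2(n,p,a,b-1,k)$ are $T^{p+1}$-free.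
   Context: For a graph $F$ and integer $p\ge1$, the edge blow-up $F^{p+1}$ is obtained from $F$ by replacing each edge by a clique $K_{p+1}$ containing that edge, the newly added vertices of distinct cliques all distinct. $R(n,d)$ denotes an almost $d$-regular graph on $n$ vertices (all degrees $d$ except at most one vertex of degree $d-1$). $K(n_1,\dots,n_p)$ is the complete $p$-partite graph with parts of sizes $n_1,\dots,n_p$, and $\vee$ denotes the join. $L_1(n_1,\dots,n_p;k)$ is the family of graphs obtained from $K(n_1,\dots,n_p)$ by embedding a copy of $R(2k-1,k-1)$ inside one part; $L_2(n_1,\dots,n_p;k)$ is obtained by embedding inside one part a copy of $R(k+1,k-1)\cup K_{k-1}$ if $k$ is even, or of $2K_k$ if $k$ is odd. For positive integers $n\ge a$: $\mathcal{H}_i(n,p,a,k)=K_{a-1}\vee L_i(n_1,\dots,n_p;k)$ ($i=1,2$) and $\mathcal{H}_2(n,p,a,d,k)=R(a-1,d)\vee L_2(n_1,\dots,n_p;k)$, taken over all $n_1,\dots,n_p$ with $\sum_i n_i=n-a+1$. *)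

theory Defs
  imports Complex_Main
begin

definition is_graph :: "'a set \<Rightarrow> 'a set set \<Rightarrow> bool" where
  "is_graph V E \<longleftrightarrow> finite V \<and> (\<forall>e\<in>E. \<exists>u v. u \<in> V \<and> v \<in> V \<and> u \<noteq> v \<and> e = {u, v})"

definition nbrs :: "'a set set \<Rightarrow> 'a \<Rightarrow> 'a set" where
  "nbrs E v = {u. {u, v} \<in> E}"

definition deg :: "'a set set \<Rightarrow> 'a \<Rightarrow> nat" where
  "deg E v = card (nbrs E v)"

definition complete_edges :: "'a set \<Rightarrow> 'a set set" where
  "complete_edges S = {{u, v} | u v. u \<in> S \<and> v \<in> S \<and> u \<noteq> v}"

definition connected_graph :: "'a set \<Rightarrow> 'a set set \<Rightarrow> bool" where
  "connected_graph V E \<longleftrightarrow> (\<forall>u\<in>V. \<forall>v\<in>V. \<exists>xs. xs \<noteq> [] \<and> hd xs = u \<and> last xs = v \<and>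
      set xs \<subseteq> V \<and> (\<forall>i < length xs - 1. {xs ! i, xs ! Suc i} \<in> E))"

definition acyclic_graph :: "'a set \<Rightarrow> 'a set set \<Rightarrow> bool" where
  "acyclic_graph V E \<longleftrightarrow> \<not> (\<exists>xs. length xs \<ge> 3 \<and> distinct xs \<and> set xs \<subseteq> V \<and>
      (\<forall>i < length xs - 1. {xs ! i, xs ! Suc i} \<in> E) \<and> {last xs, hd xs} \<in> E)"

definition is_tree :: "'a set \<Rightarrow> 'a set set \<Rightarrow> bool" where
  "is_tree V E \<longleftrightarrow> is_graph V E \<and> V \<noteq> {} \<and> connected_graph V E \<and> acyclic_graph V E"

definition colour_classes :: "'a set \<Rightarrow> 'a set set \<Rightarrow> 'a set \<Rightarrow> 'a set \<Rightarrow> bool" where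
  "colour_classes V E A B \<longleftrightarrow> A \<union> B = V \<and> A \<inter> B = {} \<and>
      (\<forall>e\<in>E. \<exists>u\<in>A. \<exists>v\<in>B. e = {u, v})"

definition subgraph_of :: "'a set \<Rightarrow> 'a set set \<Rightarrow> 'b set \<Rightarrow> 'b set set \<Rightarrow> bool" where
  "subgraph_of VF EF VG EG \<longleftrightarrow>
     (\<exists>f. inj_on f VF \<and> f ` VF \<subseteq> VG \<and> (\<forall>e\<in>EF. f ` e \<in> EG))"

text \<open>Edge blow-up F^{p+1}: each edge e gets p-1 new vertices Inr (e,i), forming with e a K_{p+1}.\<close>
definition blowup_V :: "'a set \<Rightarrow> 'a set set \<Rightarrow> nat \<Rightarrow> ('a + 'a set \<times> nat) set" where
  "blowup_V V E p = Inl ` V \<union> {Inr (e, i) | e i. e \<in> E \<and> i < p - 1}"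

definition blowup_E :: "'a set \<Rightarrow> 'a set set \<Rightarrow> nat \<Rightarrow> ('a + 'a set \<times> nat) set set" where
  "blowup_E V E p = (\<Union>e\<in>E. complete_edges (Inl ` e \<union> {Inr (e, i) | i. i < p - 1}))"

definition blowup_free :: "'a set \<Rightarrow> 'a set set \<Rightarrow> nat \<Rightarrow> 'b set \<Rightarrow> 'b set set \<Rightarrow> bool" where
  "blowup_free VF EF p VG EG \<longleftrightarrow> \<not> subgraph_of (blowup_V VF EF p) (blowup_E VF EF p) VG EG"

text \<open>R(n,d): almost d-regular graph (here the vertex set is given; its size is fixed separately).\<close>
definition almost_regular :: "nat \<Rightarrow> 'b set \<Rightarrow> 'b set set \<Rightarrow> bool" where
  "almost_regular d W EW \<longleftrightarrow> is_graph W EW \<and>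
     (\<forall>v\<in>W. deg EW v = d \<or> deg EW v = d - 1) \<and> card {v\<in>W. deg EW v \<noteq> d} \<le> 1"

definition in_family :: "('b set \<Rightarrow> 'b set set \<Rightarrow> bool) \<Rightarrow> ('b set \<Rightarrow> 'b set set \<Rightarrow> bool)
    \<Rightarrow> nat \<Rightarrow> nat \<Rightarrow> nat \<Rightarrow> 'b set \<Rightarrow> 'b set set \<Rightarrow> bool" where
  "in_family topg emb n p a V E \<longleftrightarrow>
    (\<exists>X EXX (P :: nat \<Rightarrow> 'b set) j W EW.
       finite V \<and> card V = n \<and> X \<subseteq> V \<and> card X = a - 1 \<and>
       (\<forall>i<p. P i \<noteq> {}) \<and> (\<forall>i<p. \<forall>i'<p. i \<noteq> i' \<longrightarrow> P i \<inter> P i' = {}) \<and>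
       (\<Union>i<p. P i) = V - X \<and>
       topg X EXX \<and> j < p \<and> W \<subseteq> P j \<and> emb W EW \<and>
       E = EXX \<union> EW \<union> {{u, v} | u v. u \<in> X \<and> v \<in> V - X} \<union>
           {{u, v} | u v i i'. i < p \<and> i' < p \<and> i \<noteq> i' \<and> u \<in> P i \<and> v \<in> P i'})"

definition emb_L1 :: "nat \<Rightarrow> 'b set \<Rightarrow> 'b set set \<Rightarrow> bool" where
  "emb_L1 k W EW \<longleftrightarrow> card W = 2 * k - 1 \<and> almost_regular (k - 1) W EW"

definition emb_L2 :: "nat \<Rightarrow> 'b set \<Rightarrow> 'b set set \<Rightarrow> bool" where
  "emb_L2 k W EW \<longleftrightarrow> (\<exists>W1 W2 E1. W = W1 \<union> W2 \<and> W1 \<inter> W2 = {} \<and>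
     (if even k
      then card W1 = k + 1 \<and> almost_regular (k - 1) W1 E1 \<and> card W2 = k - 1 \<and>
           EW = E1 \<union> complete_edges W2
      else card W1 = k \<and> card W2 = k \<and> EW = complete_edges W1 \<union> complete_edges W2))"

definition H1 :: "nat \<Rightarrow> nat \<Rightarrow> nat \<Rightarrow> nat \<Rightarrow> 'b set \<Rightarrow> 'b set set \<Rightarrow> bool" where
  "H1 n p a k = in_family (\<lambda>X EXX. EXX = complete_edges X) (emb_L1 k) n p a"

definition H2 :: "nat \<Rightarrow> nat \<Rightarrow> nat \<Rightarrow> nat \<Rightarrow> 'b set \<Rightarrow> 'b set set \<Rightarrow> bool" where
  "H2 n p a k = in_family (\<lambda>X EXX. EXX = complete_edges X) (emb_L2 k) n p a"

definition H2d :: "nat \<Rightarrow> nat \<Rightarrow> nat \<Rightarrow> nat \<Rightarrow> nat \<Rightarrow> 'b set \<Rightarrow> 'b set set \<Rightarrow> bool" where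
  "H2d n p a d k = in_family (\<lambda>X EXX. almost_regular d X EXX) (emb_L2 k) n p a"

end

theory Submission
  imports Defs
begin


definition edges_in :: "'a set set \<Rightarrow> 'a set \<Rightarrow> 'a set set" where
  "edges_in E U = {e \<in> E. e \<subseteq> U}"

definition ispath :: "'a set set \<Rightarrow> 'a list \<Rightarrow> bool" where
  "ispath E xs \<longleftrightarrow> (\<forall>i < length xs - 1. {xs ! i, xs ! Suc i} \<in> E)"

lemma graph_edge_neq:
  assumes "is_graph V E" "{u, w} \<in> E" shows "u \<noteq> w" "u \<in> V" "w \<in> V"
proof -
  obtain x y where "x \<in> V" "y \<in> V" "x \<noteq> y" "{u,w} = {x,y}"
    using assms unfolding is_graph_def by blast
  then show "u \<noteq> w" "u \<in> V" "w \<in> V" by (auto simp: doubleton_eq_iff)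
qed

lemma ispath_Cons:
  assumes "ispath E xs" "xs \<noteq> []" "{w, hd xs} \<in> E"
  shows "ispath E (w # xs)"
  unfolding ispath_def
proof (intro allI impI)
  fix i assume i: "i < length (w # xs) - 1"
  show "{(w # xs) ! i, (w # xs) ! Suc i} \<in> E"
  proof (cases i)
    case 0 then show ?thesis using assms(2,3) by (simp add: hd_conv_nth)
  next
    case (Suc j) then show ?thesis using assms(1) i unfolding ispath_def by auto
  qed
qed

lemma ispath_take:
  assumes "ispath E xs" shows "ispath E (take n xs)"
  using assms unfolding ispath_def by auto

lemma cycle_exists:
  assumes g: "is_graph V E" and fin: "finite U" and UV: "U \<subseteq> V" and ne: "U \<noteq> {}"
    and two: "\<forall>u\<in>U. \<exists>w1 w2. w1 \<noteq> w2 \<and> w1 \<in> U \<and> w2 \<in> U \<and> {u, w1} \<in> E \<and> {u, w2} \<in> E"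
  shows "\<not> acyclic_graph V E"
proof -
  define P where "P = (\<lambda>n. \<exists>xs. length xs = n \<and> xs \<noteq> [] \<and> distinct xs \<and> set xs \<subseteq> U \<and> ispath E xs)"
  obtain u where u: "u \<in> U" using ne by blast
  have P1: "P 1" unfolding P_def by (rule exI[of _ "[u]"]) (auto simp: u ispath_def)
  have bnd: "\<forall>y. P y \<longrightarrow> y \<le> card U"
    unfolding P_def using fin by (metis card_mono distinct_card)
  obtain m where m: "P m" and mmax: "\<forall>y. P y \<longrightarrow> y \<le> m"
    using Nat.ex_has_greatest_nat[OF P1 bnd] by blast
  obtain xs where xs: "length xs = m" "xs \<noteq> []" "distinct xs" "set xs \<subseteq> U" "ispath E xs"
    using m unfolding P_def by blast
  define v0 where "v0 = hd xs"
  have v0U: "v0 \<in> U" using xs unfolding v0_def by (simp add: subset_iff)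
  obtain w1 w2 where w: "w1 \<noteq> w2" "w1 \<in> U" "w2 \<in> U" "{v0, w1} \<in> E" "{v0, w2} \<in> E"
    using two v0U by blast
  have inxs: "w \<in> set xs" if "w \<in> U" "{v0, w} \<in> E" for w
  proof (rule ccontr)
    assume nw: "w \<notin> set xs"
    have "{w, hd xs} \<in> E" using that(2) unfolding v0_def by (simp add: insert_commute)
    then have "P (Suc m)" unfolding P_def
      using xs nw that(1) ispath_Cons[OF xs(5) xs(2)] by (intro exI[of _ "w # xs"]) auto
    then show False using mmax by fastforce
  qed
  have w1x: "w1 \<in> set xs" and w2x: "w2 \<in> set xs" using inxs w by auto
  have nv0: "w1 \<noteq> v0" "w2 \<noteq> v0" using graph_edge_neq[OF g w(4)] graph_edge_neq[OF g w(5)] by auto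
  obtain w where ww: "w \<in> set xs" "w \<noteq> v0" "{v0, w} \<in> E" "length xs \<ge> 2 \<longrightarrow> w \<noteq> xs ! 1"
    using w w1x w2x nv0 by metis
  obtain i where i: "i < length xs" "xs ! i = w" using ww(1) by (metis in_set_conv_nth)
  have i0: "i \<noteq> 0" using i ww(2) xs(2) unfolding v0_def by (metis hd_conv_nth)
  have len2: "length xs \<ge> 2" using i i0 by linarith
  have i1: "i \<noteq> 1" using i ww(4) len2 by auto
  define ys where "ys = take (Suc i) xs"
  have ylen: "length ys = Suc i" using i unfolding ys_def by simp
  have "length ys \<ge> 3" using ylen i0 i1 by linarith
  moreover have "distinct ys" using xs(3) unfolding ys_def by simp
  moreover have "set ys \<subseteq> V" using xs(4) UV unfolding ys_def by (meson order_trans set_take_subset)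
  moreover have "\<forall>i < length ys - 1. {ys ! i, ys ! Suc i} \<in> E"
    using ispath_take[OF xs(5)] unfolding ys_def ispath_def by blast
  moreover have "last ys = w" using i ylen unfolding ys_def by (simp add: last_conv_nth take_Suc_conv_app_nth)
  moreover have "hd ys = v0" using xs(2) unfolding ys_def v0_def by (simp add: hd_take)
  ultimately show ?thesis unfolding acyclic_graph_def using ww(3)
    by (metis insert_commute)
qed

lemma forest_edges:
  assumes g: "is_graph V E" and ac: "acyclic_graph V E"
  shows "U \<subseteq> V \<Longrightarrow> U \<noteq> {} \<Longrightarrow> card (edges_in E U) + 1 \<le> card U"
proof (induction "card U" arbitrary: U rule: less_induct)
  case less
  have finV: "finite V" using g unfolding is_graph_def by simp
  have finU: "finite U" using less.prems finV finite_subset by blast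
  have finE: "finite (edges_in E U)"
  proof -
    have "edges_in E U \<subseteq> Pow U" unfolding edges_in_def by auto
    then show ?thesis using finU finite_subset by blast
  qed
  show ?case
  proof (cases "\<exists>u\<in>U. card {w \<in> U. {u, w} \<in> E} \<le> 1")
    case True
    then obtain u where u: "u \<in> U" and cu: "card {w \<in> U. {u, w} \<in> E} \<le> 1" by blast
    have sub: "edges_in E U \<subseteq> edges_in E (U - {u}) \<union> (\<lambda>w. {u, w}) ` {w \<in> U. {u, w} \<in> E}"
    proof
      fix e assume e: "e \<in> edges_in E U"
      then have eE: "e \<in> E" and eU: "e \<subseteq> U" unfolding edges_in_def by auto
      obtain x y where xy: "e = {x, y}" "x \<noteq> y" using g eE unfolding is_graph_def by blast
      show "e \<in> edges_in E (U - {u}) \<union> (\<lambda>w. {u, w}) ` {w \<in> U. {u, w} \<in> E}"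
      proof (cases "u \<in> e")
        case True
        then have "u = x \<or> u = y" using xy by auto
        then show ?thesis using xy eE eU by (auto simp: insert_commute)
      next
        case False then show ?thesis using eE eU unfolding edges_in_def by auto
      qed
    qed
    show ?thesis
    proof (cases "U - {u} = {}")
      case True
      then have "U = {u}" using u by auto
      have "edges_in E U = {}"
      proof (rule ccontr)
        assume "edges_in E U \<noteq> {}"
        then obtain e where "e \<in> E" "e \<subseteq> {u}" using \<open>U = {u}\<close> unfolding edges_in_def by auto
        then show False using g unfolding is_graph_def by fastforce
      qed
      then show ?thesis using \<open>U = {u}\<close> by simp
    next
      case False
      have lt: "card (U - {u}) < card U" using u finU by (meson card_Diff1_less)
      have IH: "card (edges_in E (U - {u})) + 1 \<le> card (U - {u})"
        using less.hyps[OF lt] less.prems False by blast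
      have "card (edges_in E U) \<le> card (edges_in E (U - {u})) + card ((\<lambda>w. {u, w}) ` {w \<in> U. {u, w} \<in> E})"
        by (rule order_trans[OF card_mono[OF _ sub] card_Un_le]) (auto intro: finite_subset[OF _ finE] simp: finU edges_in_def)
      also have "\<dots> \<le> card (edges_in E (U - {u})) + 1"
        using card_image_le[of "{w \<in> U. {u, w} \<in> E}" "\<lambda>w. {u, w}"] cu finU by simp
      finally show ?thesis using IH card_Diff1_less[OF finU u] u finU
        by (simp add: card_Diff_singleton)
    qed
  next
    case False
    have "\<forall>u\<in>U. \<exists>w1 w2. w1 \<noteq> w2 \<and> w1 \<in> U \<and> w2 \<in> U \<and> {u, w1} \<in> E \<and> {u, w2} \<in> E"
    proof
      fix u assume "u \<in> U"
      then have "card {w \<in> U. {u, w} \<in> E} \<ge> 2" using False by fastforce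
      then obtain S where "S \<subseteq> {w \<in> U. {u, w} \<in> E}" "card S = 2"
        by (meson obtain_subset_with_card_n)
      then show "\<exists>w1 w2. w1 \<noteq> w2 \<and> w1 \<in> U \<and> w2 \<in> U \<and> {u, w1} \<in> E \<and> {u, w2} \<in> E"
        by (auto simp: card_2_iff)
    qed
    then have "\<not> acyclic_graph V E" using cycle_exists[OF g finU less.prems(1,2)] by blast
    then show ?thesis using ac by blast
  qed
qed


locale core =
  fixes V :: "'a set" and E :: "'a set set" and A B :: "'a set" and p :: nat
    and VG :: "'b set" and EG :: "'b set set" and X C1 C2 :: "'b set"
    and f :: "'a + 'a set \<times> nat \<Rightarrow> 'b"
  assumes tree: "is_tree V E" and col: "colour_classes V E A B" and p1: "p \<ge> 1"
    and finX: "finite X" and finC1: "finite C1" and finC2: "finite C2"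
    and disjC: "C1 \<inter> C2 = {}" and disjX1: "X \<inter> C1 = {}" and disjX2: "X \<inter> C2 = {}"
    and hQ: "\<And>Q. Q \<subseteq> VG \<Longrightarrow> card Q = p + 1 \<Longrightarrow> (\<forall>u\<in>Q. \<forall>v\<in>Q. u \<noteq> v \<longrightarrow> {u, v} \<in> EG)
              \<Longrightarrow> Q \<inter> X = {} \<Longrightarrow> \<exists>u\<in>Q. \<exists>v\<in>Q. u \<noteq> v \<and> u \<in> C1 \<union> C2 \<and> v \<in> C1 \<union> C2"
    and hcross: "\<And>u v. u \<in> C1 \<Longrightarrow> v \<in> C2 \<Longrightarrow> {u, v} \<notin> EG"
    and inj: "inj_on f (blowup_V V E p)" and img: "f ` blowup_V V E p \<subseteq> VG"
    and hom: "\<forall>e\<in>blowup_E V E p. f ` e \<in> EG"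
begin

lemma graph: "is_graph V E" and acyc: "acyclic_graph V E"
  using tree unfolding is_tree_def by auto

lemma finV: "finite V" using graph unfolding is_graph_def by simp

lemma AB: "A \<union> B = V" "A \<inter> B = {}" using col unfolding colour_classes_def by auto

lemma edge_AB: assumes "e \<in> E" obtains u v where "e = {u, v}" "u \<in> A" "v \<in> B" "u \<noteq> v"
proof -
  obtain u v where "u \<in> A" "v \<in> B" "e = {u, v}" using assms col unfolding colour_classes_def by blast
  moreover have "u \<noteq> v" using calculation AB by blast
  ultimately show ?thesis using that by blast
qed

lemma edge_sub: assumes "e \<in> E" shows "e \<subseteq> V"
proof -
  obtain u v where "u \<in> V" "v \<in> V" "e = {u, v}" using graph assms unfolding is_graph_def by meson
  then show ?thesis by simp
qed

lemma finE: "finite E"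
proof -
  have "E \<subseteq> Pow V" using edge_sub by blast
  then show ?thesis using finV finite_subset by blast
qed

lemma card_edge: assumes "e \<in> E" shows "card e = 2"
proof -
  obtain u v where "e = {u, v}" "u \<noteq> v" using edge_AB[OF assms] by blast
  then show ?thesis by simp
qed

definition phi where "phi v = f (Inl v)"
definition newv :: "'a set \<Rightarrow> ('a + 'a set \<times> nat) set" where
  "newv e = {Inr (e, i) | i. i < p - 1}"
definition K where "K e = Inl ` e \<union> newv e"
definition Q where "Q e = f ` K e"

lemma K_sub: "e \<in> E \<Longrightarrow> K e \<subseteq> blowup_V V E p"
  unfolding K_def newv_def blowup_V_def using edge_sub by blast

lemma inl_sub: "Inl ` V \<subseteq> blowup_V V E p" unfolding blowup_V_def by blast

lemma phi_inj: "inj_on phi V"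
  unfolding phi_def inj_on_def using inj inl_sub by (auto dest: inj_onD)

lemma card_newv: "card (newv e) = p - 1"
proof -
  have "newv e = (\<lambda>i. Inr (e, i)) ` {..<p - 1}" unfolding newv_def by auto
  moreover have "inj_on (\<lambda>i. Inr (e, i) :: 'a + 'a set \<times> nat) {..<p - 1}" by (auto simp: inj_on_def)
  ultimately show ?thesis by (simp add: card_image)
qed

lemma fin_newv: "finite (newv e)"
proof -
  have "newv e = (\<lambda>i. Inr (e, i)) ` {..<p - 1}" unfolding newv_def by auto
  then show ?thesis by simp
qed

lemma card_K: assumes "e \<in> E" shows "card (K e) = p + 1"
proof -
  have "card (Inl ` e :: ('a + 'a set \<times> nat) set) = 2" using card_edge[OF assms] by (simp add: card_image)
  moreover have "Inl ` e \<inter> newv e = {}" unfolding newv_def by auto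
  moreover have "finite e" using card_edge[OF assms] card.infinite by fastforce
  ultimately show ?thesis unfolding K_def using card_newv fin_newv p1
    by (simp add: card_Un_disjoint)
qed

lemma Q_sub: "e \<in> E \<Longrightarrow> Q e \<subseteq> VG" unfolding Q_def using K_sub img by blast

lemma card_Q: "e \<in> E \<Longrightarrow> card (Q e) = p + 1"
  unfolding Q_def using card_K K_sub inj by (metis card_image inj_on_subset)

lemma Q_clique: assumes "e \<in> E" "u \<in> Q e" "v \<in> Q e" "u \<noteq> v" shows "{u, v} \<in> EG"
proof -
  obtain s t where st: "s \<in> K e" "t \<in> K e" "u = f s" "v = f t" using assms unfolding Q_def by blast
  have "s \<noteq> t" using st assms by blast
  then have "{s, t} \<in> complete_edges (K e)" unfolding complete_edges_def using st by blast
  then have "{s, t} \<in> blowup_E V E p" unfolding blowup_E_def K_def newv_def using assms(1) by blast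
  then show ?thesis using hom st by force
qed

lemma K_int: assumes "e \<in> E" "e' \<in> E" "e \<noteq> e'" shows "K e \<inter> K e' \<subseteq> Inl ` (e \<inter> e')"
  using assms unfolding K_def newv_def by auto

lemma Q_int: assumes "e \<in> E" "e' \<in> E" "e \<noteq> e'" shows "Q e \<inter> Q e' \<subseteq> phi ` (e \<inter> e')"
proof
  fix w assume "w \<in> Q e \<inter> Q e'"
  then obtain s t where st: "s \<in> K e" "t \<in> K e'" "w = f s" "w = f t" unfolding Q_def by blast
  have "s \<in> blowup_V V E p" "t \<in> blowup_V V E p" using st K_sub assms by blast+
  then have "s = t" using inj_onD[OF inj] st by metis
  then have "s \<in> Inl ` (e \<inter> e')" using K_int[OF assms] st by blast
  then show "w \<in> phi ` (e \<inter> e')" using st unfolding phi_def by blast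
qed

lemma phi_Q: "e \<in> E \<Longrightarrow> v \<in> e \<Longrightarrow> phi v \<in> Q e"
  unfolding phi_def Q_def K_def by blast

lemma phi_VG: "v \<in> V \<Longrightarrow> phi v \<in> VG" unfolding phi_def using img inl_sub by blast

end


lemma double_count:
  assumes "finite Fs" "finite Rs"
  shows "(\<Sum>e\<in>Fs. card (e \<inter> Rs)) = (\<Sum>v\<in>Rs. card {e \<in> Fs. v \<in> e})"
proof -
  have "(\<Sum>e\<in>Fs. card (e \<inter> Rs)) = (\<Sum>e\<in>Fs. \<Sum>v\<in>Rs. if v \<in> e then 1 else 0)"
  proof (rule sum.cong[OF refl])
    fix e
    have "e \<inter> Rs = {v \<in> Rs. v \<in> e}" by auto
    then show "card (e \<inter> Rs) = (\<Sum>v\<in>Rs. if v \<in> e then 1 else 0)"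
      using assms(2) by (simp add: sum.inter_filter[symmetric])
  qed
  also have "\<dots> = (\<Sum>v\<in>Rs. \<Sum>e\<in>Fs. if v \<in> e then 1 else 0)" by (rule sum.swap)
  also have "\<dots> = (\<Sum>v\<in>Rs. card {e \<in> Fs. v \<in> e})"
    using assms(1) by (simp add: sum.inter_filter[symmetric])
  finally show ?thesis .
qed

context core begin

definition S where "S = {v \<in> V. phi v \<in> X}"
definition NX where "NX = {e \<in> E. e \<inter> S = {} \<and> (\<exists>s \<in> newv e. f s \<in> X)}"
definition F where "F = {e \<in> E. e \<inter> S = {} \<and> e \<notin> NX}"
definition FC where "FC C = {e \<in> F. 2 \<le> card (Q e \<inter> C)}"
definition R where "R C = {v \<in> V. phi v \<in> C}"
definition dC where "dC C v = card {e \<in> FC C. v \<in> e}"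
definition Ap where "Ap = A - S"

lemma F_sub: "F \<subseteq> E" unfolding F_def by auto
lemma FC_sub: "FC C \<subseteq> F" unfolding FC_def by auto
lemma finF: "finite F" using F_sub finE finite_subset by blast
lemma finFC: "finite (FC C)" using FC_sub finF finite_subset by blast
lemma finR: "finite (R C)" unfolding R_def using finV by simp
lemma R_sub: "R C \<subseteq> V" unfolding R_def by auto
lemma S_sub: "S \<subseteq> V" unfolding S_def by auto
lemma finS: "finite S" using S_sub finV finite_subset by blast
lemma finA: "finite A" using AB finV by (metis finite_Un)
lemma finB: "finite B" using AB finV by (metis finite_Un)
lemma NX_sub: "NX \<subseteq> E" unfolding NX_def by auto
lemma finNX: "finite NX" using NX_sub finE finite_subset by blast

lemma budget: "card S + card NX \<le> card X"
proof -
  define g where "g e = (SOME s. s \<in> newv e \<and> f s \<in> X)" for e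
  have g: "g e \<in> newv e \<and> f (g e) \<in> X" if "e \<in> NX" for e
  proof -
    have "\<exists>s. s \<in> newv e \<and> f s \<in> X" using that unfolding NX_def by blast
    then show ?thesis unfolding g_def by (rule someI_ex)
  qed
  define M where "M = Inl ` S \<union> g ` NX"
  have Msub: "M \<subseteq> blowup_V V E p"
  proof
    fix s assume "s \<in> M"
    then consider (a) v where "v \<in> S" "s = Inl v" | (b) e where "e \<in> NX" "s = g e" unfolding M_def by blast
    then show "s \<in> blowup_V V E p"
    proof cases
      case a then show ?thesis using S_sub inl_sub by blast
    next
      case b then show ?thesis using g[of e] K_sub[of e] NX_sub unfolding K_def by blast
    qed
  qed
  have ginj: "inj_on g NX"
  proof (rule inj_onI)
    fix e e' assume "e \<in> NX" "e' \<in> NX" "g e = g e'"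
    then show "e = e'" using g[of e] g[of e'] unfolding newv_def by auto
  qed
  have disj: "Inl ` S \<inter> g ` NX = {}"
  proof -
    have "g ` NX \<subseteq> (\<Union>e. newv e)" using g by blast
    moreover have "Inl ` S \<inter> (\<Union>e. newv e) = {}" unfolding newv_def by auto
    ultimately show ?thesis by blast
  qed
  have "card M = card S + card NX"
    unfolding M_def using disj finS finNX ginj
    by (simp add: card_Un_disjoint card_image)
  moreover have "card (f ` M) = card M" using inj Msub by (meson card_image inj_on_subset)
  moreover have "f ` M \<subseteq> X"
  proof
    fix w assume "w \<in> f ` M"
    then obtain s where "s \<in> M" "w = f s" by blast
    then consider (a) v where "v \<in> S" "s = Inl v" | (b) e where "e \<in> NX" "s = g e" unfolding M_def by blast
    then show "w \<in> X"
    proof cases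
      case a then show ?thesis using \<open>w = f s\<close> unfolding S_def phi_def by simp
    next
      case b then show ?thesis using g[of e] \<open>w = f s\<close> by simp
    qed
  qed
  ultimately show ?thesis using finX by (metis card_mono)
qed

lemma F_noX: assumes "e \<in> F" shows "Q e \<inter> X = {}"
proof (rule ccontr)
  assume "Q e \<inter> X \<noteq> {}"
  then obtain s where s: "s \<in> K e" "f s \<in> X" unfolding Q_def by blast
  have eE: "e \<in> E" and eS: "e \<inter> S = {}" and eN: "e \<notin> NX" using assms unfolding F_def by auto
  show False
  proof (cases "s \<in> newv e")
    case True then show False using eE eS eN s unfolding NX_def by blast
  next
    case False
    then obtain v where "v \<in> e" "s = Inl v" using s unfolding K_def by blast
    then have "v \<in> S" using s edge_sub[OF eE] unfolding S_def phi_def by auto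
    then show False using eS \<open>v \<in> e\<close> by blast
  qed
qed

lemma card2I: assumes "finite Z" "u \<in> Z" "v \<in> Z" "u \<noteq> v" shows "2 \<le> card Z"
proof -
  have "card {u, v} \<le> card Z" using assms by (intro card_mono) auto
  then show ?thesis using assms by simp
qed

lemma finQ: assumes "e \<in> E" shows "finite (Q e)"
proof (rule ccontr)
  assume "infinite (Q e)"
  then have "card (Q e) = 0" by simp
  then show False using card_Q[OF assms] by simp
qed

lemma W0: assumes "e \<in> F" shows "e \<in> FC C1 \<or> e \<in> FC C2"
proof -
  have eE: "e \<in> E" using assms F_sub by blast
  obtain u v where uv: "u \<in> Q e" "v \<in> Q e" "u \<noteq> v" "u \<in> C1 \<union> C2" "v \<in> C1 \<union> C2"
    using hQ[OF Q_sub[OF eE] card_Q[OF eE] _ F_noX[OF assms]] Q_clique[OF eE] by blast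
  have adj: "{u, v} \<in> EG" using Q_clique[OF eE uv(1,2,3)] .
  have "(u \<in> C1 \<and> v \<in> C1) \<or> (u \<in> C2 \<and> v \<in> C2)"
    using uv(4,5) adj hcross by (metis insert_commute Un_iff)
  then show ?thesis
  proof
    assume "u \<in> C1 \<and> v \<in> C1"
    then have "2 \<le> card (Q e \<inter> C1)" using uv finQ[OF eE] by (intro card2I) auto
    then show ?thesis using assms unfolding FC_def by blast
  next
    assume "u \<in> C2 \<and> v \<in> C2"
    then have "2 \<le> card (Q e \<inter> C2)" using uv finQ[OF eE] by (intro card2I) auto
    then show ?thesis using assms unfolding FC_def by blast
  qed
qed


definition newC where "newC C e = {s \<in> newv e. f s \<in> C}"

lemma fin_newC: "finite (newC C e)" unfolding newC_def using fin_newv by simp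

lemma newv_disj: "e \<noteq> e' \<Longrightarrow> newv e \<inter> newv e' = {}" unfolding newv_def by auto

lemma W1: assumes finC: "finite C"
  shows "2 * card (FC C) + card (R C) \<le> card C + (\<Sum>v\<in>R C. dC C v)"
proof -
  have pt: "2 \<le> card (e \<inter> R C) + card (newC C e)" if eF: "e \<in> FC C" for e
  proof -
    have eE: "e \<in> E" using eF FC_sub F_sub by blast
    have fine: "finite e" using card_edge[OF eE] card.infinite by fastforce
    have sub: "Q e \<inter> C \<subseteq> phi ` (e \<inter> R C) \<union> f ` newC C e"
    proof
      fix w assume w: "w \<in> Q e \<inter> C"
      then obtain s where s: "s \<in> K e" "w = f s" unfolding Q_def by blast
      show "w \<in> phi ` (e \<inter> R C) \<union> f ` newC C e"
      proof (cases "s \<in> newv e")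
        case True then show ?thesis using s w unfolding newC_def by blast
      next
        case False
        then obtain v where v: "v \<in> e" "s = Inl v" using s unfolding K_def by blast
        then have "v \<in> R C" using w s edge_sub[OF eE] unfolding R_def phi_def by auto
        then show ?thesis using v s unfolding phi_def by blast
      qed
    qed
    have "2 \<le> card (Q e \<inter> C)" using eF unfolding FC_def by blast
    also have "\<dots> \<le> card (phi ` (e \<inter> R C) \<union> f ` newC C e)"
      using sub fine fin_newC by (intro card_mono) auto
    also have "\<dots> \<le> card (phi ` (e \<inter> R C)) + card (f ` newC C e)" by (rule card_Un_le)
    also have "\<dots> \<le> card (e \<inter> R C) + card (newC C e)"
      by (intro add_mono card_image_le) (use fine fin_newC in auto)
    finally show ?thesis .
  qed
  define U where "U = (\<Union>e\<in>FC C. newC C e)"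
  have cardU: "card U = (\<Sum>e\<in>FC C. card (newC C e))"
    unfolding U_def using finFC fin_newC
    by (intro card_UN_disjoint) (auto simp: newC_def newv_def)
  have Usub: "U \<subseteq> blowup_V V E p"
  proof
    fix s assume "s \<in> U"
    then obtain e where "e \<in> FC C" "s \<in> newv e" unfolding U_def newC_def by blast
    then show "s \<in> blowup_V V E p" using K_sub[of e] FC_sub F_sub unfolding K_def by blast
  qed
  have finU: "finite U" unfolding U_def using finFC fin_newC by blast
  have fU: "f ` U \<subseteq> C - phi ` R C"
  proof
    fix w assume "w \<in> f ` U"
    then obtain s e where s: "s \<in> newv e" "f s \<in> C" "w = f s" "s \<in> U" unfolding U_def newC_def by blast
    have "w \<notin> phi ` R C"
    proof
      assume "w \<in> phi ` R C"
      then obtain v where v: "v \<in> R C" "w = f (Inl v)" unfolding phi_def by blast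
      have "Inl v \<in> blowup_V V E p" using v R_sub inl_sub by blast
      then have "s = Inl v" using inj_onD[OF inj] s Usub v by (metis subsetD)
      then show False using s unfolding newv_def by auto
    qed
    then show "w \<in> C - phi ` R C" using s by blast
  qed
  have phiR: "phi ` R C \<subseteq> C" unfolding R_def by blast
  have cphiR: "card (phi ` R C) = card (R C)" using phi_inj R_sub by (meson card_image inj_on_subset)
  have "card U = card (f ` U)" using inj Usub by (metis card_image inj_on_subset)
  also have "\<dots> \<le> card (C - phi ` R C)" using fU finC by (intro card_mono) auto
  also have "\<dots> = card C - card (R C)" using phiR cphiR finC by (simp add: card_Diff_subset finite_subset)
  finally have U_le: "card U \<le> card C - card (R C)" .
  have RC: "card (R C) \<le> card C" using cphiR phiR finC card_mono by metis
  have "2 * card (FC C) = (\<Sum>e\<in>FC C. 2)" by simp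
  also have "\<dots> \<le> (\<Sum>e\<in>FC C. card (e \<inter> R C) + card (newC C e))" by (rule sum_mono) (use pt in auto)
  also have "\<dots> = (\<Sum>e\<in>FC C. card (e \<inter> R C)) + card U" by (simp add: sum.distrib cardU)
  also have "(\<Sum>e\<in>FC C. card (e \<inter> R C)) = (\<Sum>v\<in>R C. dC C v)"
    unfolding dC_def using finFC finR by (rule double_count)
  finally show ?thesis using U_le RC by linarith
qed

lemma edge_int: assumes "e \<in> E" "e' \<in> E" "e \<noteq> e'" "v \<in> e" "v \<in> e'" shows "e \<inter> e' = {v}"
proof -
  obtain x where x: "e = {v, x}" "v \<noteq> x"
    using edge_AB[OF assms(1)] assms(4) by (metis insert_commute insertE singletonD)
  obtain y where y: "e' = {v, y}" "v \<noteq> y"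
    using edge_AB[OF assms(2)] assms(5) by (metis insert_commute insertE singletonD)
  have "x \<noteq> y" using x y assms(3) by blast
  then show ?thesis using x y by auto
qed

lemma W2: assumes finC: "finite C" and D: "card {w \<in> C. w \<noteq> phi v \<and> {phi v, w} \<in> EG} \<le> D"
    and v: "v \<in> R C"
  shows "dC C v \<le> D"
proof -
  define T where "T = {w \<in> C. w \<noteq> phi v \<and> {phi v, w} \<in> EG}"
  define h where "h e = (SOME w. w \<in> Q e \<inter> C \<and> w \<noteq> phi v)" for e
  have h: "h e \<in> Q e \<inter> C \<and> h e \<noteq> phi v" if e: "e \<in> FC C" for e
  proof -
    have eE: "e \<in> E" using e FC_sub F_sub by blast
    have "\<exists>w. w \<in> Q e \<inter> C \<and> w \<noteq> phi v"
    proof (rule ccontr)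
      assume "\<not> ?thesis"
      then have "Q e \<inter> C \<subseteq> {phi v}" by blast
      then have "card (Q e \<inter> C) \<le> 1" using card_mono[of "{phi v}"] by fastforce
      then show False using e unfolding FC_def by simp
    qed
    then show ?thesis unfolding h_def by (rule someI_ex)
  qed
  have maps: "h ` {e \<in> FC C. v \<in> e} \<subseteq> T"
  proof
    fix w assume "w \<in> h ` {e \<in> FC C. v \<in> e}"
    then obtain e where e: "e \<in> FC C" "v \<in> e" "w = h e" by blast
    have eE: "e \<in> E" using e FC_sub F_sub by blast
    have "{phi v, w} \<in> EG" using Q_clique[OF eE phi_Q[OF eE e(2)], of w] h[OF e(1)] e(3) by auto
    then show "w \<in> T" unfolding T_def using h[OF e(1)] e(3) by auto
  qed
  have injh: "inj_on h {e \<in> FC C. v \<in> e}"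
  proof (rule inj_onI)
    fix e e' assume e: "e \<in> {e \<in> FC C. v \<in> e}" and e': "e' \<in> {e \<in> FC C. v \<in> e}" and eq: "h e = h e'"
    show "e = e'"
    proof (rule ccontr)
      assume ne: "e \<noteq> e'"
      have eE: "e \<in> E" "e' \<in> E" using e e' FC_sub F_sub by auto
      have "h e \<in> Q e \<inter> Q e'" using h[of e] h[of e'] e e' eq by auto
      then have "h e \<in> phi ` (e \<inter> e')" using Q_int[OF eE ne] by blast
      moreover have "e \<inter> e' = {v}" using edge_int[OF eE ne] e e' by auto
      ultimately have "h e = phi v" by simp
      then show False using h[of e] e by auto
    qed
  qed
  have "dC C v = card (h ` {e \<in> FC C. v \<in> e})" unfolding dC_def using injh by (simp add: card_image)
  also have "\<dots> \<le> card T" using maps finC unfolding T_def by (intro card_mono) auto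
  finally show ?thesis using D unfolding T_def by simp
qed

lemma W3: assumes "v \<in> R C1" "e \<in> FC C2" "v \<in> e" shows False
proof -
  have eE: "e \<in> E" using assms FC_sub F_sub by blast
  have "Q e \<inter> C2 \<noteq> {}" using assms(2) unfolding FC_def by fastforce
  then obtain w where w: "w \<in> Q e" "w \<in> C2" by blast
  have pv: "phi v \<in> C1" "phi v \<in> Q e" using assms(1) phi_Q[OF eE assms(3)] unfolding R_def by auto
  have "phi v \<noteq> w" using pv w disjC by blast
  then have "{phi v, w} \<in> EG" using Q_clique[OF eE pv(2) w(1)] by blast
  then show False using hcross pv w by blast
qed

lemma W3': assumes "v \<in> R C2" "e \<in> FC C1" "v \<in> e" shows False
proof -
  have eE: "e \<in> E" using assms FC_sub F_sub by blast
  have "Q e \<inter> C1 \<noteq> {}" using assms(2) unfolding FC_def by fastforce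
  then obtain w where w: "w \<in> Q e" "w \<in> C1" by blast
  have pv: "phi v \<in> C2" "phi v \<in> Q e" using assms(1) phi_Q[OF eE assms(3)] unfolding R_def by auto
  have "phi v \<noteq> w" using pv w disjC by blast
  then have "{w, phi v} \<in> EG" using Q_clique[OF eE w(1) pv(2)] by blast
  then show False using hcross pv w by blast
qed

lemma W4: assumes ne: "R C \<noteq> {}"
  shows "(\<Sum>v\<in>R C. dC C v) + 1 \<le> card (FC C) + card (R C)"
proof -
  have pt: "card (e \<inter> R C) \<le> 1 + (if e \<subseteq> R C then 1 else 0)" if "e \<in> FC C" for e
  proof -
    have eE: "e \<in> E" using that FC_sub F_sub by blast
    have c2: "card e = 2" using card_edge[OF eE] .
    have fine: "finite e" using c2 card.infinite by fastforce
    show ?thesis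
    proof (cases "e \<subseteq> R C")
      case True then show ?thesis using c2 by (simp add: Int_absorb2)
    next
      case False
      then have "e \<inter> R C \<subset> e" by blast
      then have "card (e \<inter> R C) < card e" using fine by (meson psubset_card_mono)
      then show ?thesis using c2 False by simp
    qed
  qed
  have "(\<Sum>v\<in>R C. dC C v) = (\<Sum>e\<in>FC C. card (e \<inter> R C))"
    unfolding dC_def using finFC finR by (rule double_count[symmetric])
  also have "\<dots> \<le> (\<Sum>e\<in>FC C. 1 + (if e \<subseteq> R C then 1 else 0))" by (rule sum_mono) (use pt in auto)
  also have "\<dots> = card (FC C) + card {e \<in> FC C. e \<subseteq> R C}"
  proof -
    have "(\<Sum>e\<in>FC C. 1 + (if e \<subseteq> R C then 1 else 0)) = (\<Sum>e\<in>FC C. (1::nat)) + (\<Sum>e\<in>FC C. if e \<subseteq> R C then 1 else 0)"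
      by (rule sum.distrib)
    moreover have "(\<Sum>e\<in>FC C. if e \<subseteq> R C then 1 else (0::nat)) = card {e \<in> FC C. e \<subseteq> R C}"
      using finFC[of C] by (simp add: sum.inter_filter[symmetric])
    ultimately show ?thesis by simp
  qed
  also have "card {e \<in> FC C. e \<subseteq> R C} \<le> card (edges_in E (R C))"
  proof (rule card_mono)
    show "finite (edges_in E (R C))" using finE unfolding edges_in_def by simp
    show "{e \<in> FC C. e \<subseteq> R C} \<subseteq> edges_in E (R C)" unfolding edges_in_def using FC_sub F_sub by blast
  qed
  finally show ?thesis using forest_edges[OF graph acyc R_sub ne] by linarith
qed


lemma edge_oneB: assumes "e \<in> E" "v \<in> e" "v' \<in> e" "v \<in> B" "v' \<in> B" shows "v = v'"
proof -
  obtain u w where "e = {u, w}" "u \<in> A" "w \<in> B" using edge_AB[OF assms(1)] by metis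
  then show ?thesis using assms AB by auto
qed

lemma edge_oneA: assumes "e \<in> E" "v \<in> e" "v' \<in> e" "v \<in> A" "v' \<in> A" shows "v = v'"
proof -
  obtain u w where "e = {u, w}" "u \<in> A" "w \<in> B" using edge_AB[OF assms(1)] by metis
  then show ?thesis using assms AB by auto
qed

lemma Ap_sub: "Ap \<subseteq> A" unfolding Ap_def by auto

lemma W5: assumes Y: "Y \<subseteq> S" "Y \<subseteq> B" and ApNE: "Ap \<noteq> {}" and XC: "X \<inter> C = {}"
  shows "(\<Sum>v\<in>R C \<inter> B. dC C v) + card (edges_in E (Ap \<union> Y)) + 1 \<le> card Ap + card (R C \<inter> B) + card Y"
proof -
  define RB where "RB = R C \<inter> B"
  define G1 where "G1 = (\<Union>v\<in>RB. {e \<in> FC C. v \<in> e})"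
  define G2 where "G2 = edges_in E (Ap \<union> Y)"
  have finRB: "finite RB" unfolding RB_def using finR by simp
  have cG1: "card G1 = (\<Sum>v\<in>RB. dC C v)"
    unfolding G1_def dC_def
  proof (rule card_UN_disjoint[OF finRB])
    show "\<forall>i\<in>RB. finite {e \<in> FC C. i \<in> e}" using finFC by simp
    show "\<forall>i\<in>RB. \<forall>j\<in>RB. i \<noteq> j \<longrightarrow> {e \<in> FC C. i \<in> e} \<inter> {e \<in> FC C. j \<in> e} = {}"
      using edge_oneB FC_sub F_sub unfolding RB_def by blast
  qed
  have G1sub: "G1 \<subseteq> edges_in E (Ap \<union> RB)"
  proof
    fix e assume "e \<in> G1"
    then obtain v where v: "v \<in> RB" "e \<in> FC C" "v \<in> e" unfolding G1_def by blast
    have eF: "e \<in> F" and eE: "e \<in> E" using v FC_sub F_sub by auto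
    obtain u w where uw: "e = {u, w}" "u \<in> A" "w \<in> B" using edge_AB[OF eE] by metis
    have "v = w" using uw v AB unfolding RB_def by auto
    moreover have "u \<notin> S" using eF uw unfolding F_def by auto
    ultimately show "e \<in> edges_in E (Ap \<union> RB)" using uw v eE unfolding edges_in_def Ap_def by auto
  qed
  have disj: "G1 \<inter> G2 = {}"
  proof (rule ccontr)
    assume "G1 \<inter> G2 \<noteq> {}"
    then obtain e v where v: "v \<in> RB" "e \<in> FC C" "v \<in> e" "e \<subseteq> Ap \<union> Y"
      unfolding G1_def G2_def edges_in_def by blast
    then have "v \<in> Ap \<or> v \<in> Y" by blast
    moreover have "v \<notin> Ap" using v Ap_sub AB unfolding RB_def by blast
    moreover have "v \<notin> Y"
    proof
      assume "v \<in> Y"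
      then have "phi v \<in> X" using Y unfolding S_def by blast
      moreover have "phi v \<in> C" using v unfolding RB_def R_def by blast
      ultimately show False using XC by blast
    qed
    ultimately show False by blast
  qed
  have sub: "G1 \<union> G2 \<subseteq> edges_in E (Ap \<union> RB \<union> Y)"
    using G1sub unfolding G2_def edges_in_def by blast
  have UV: "Ap \<union> RB \<union> Y \<subseteq> V" using Ap_sub AB R_sub Y S_sub unfolding RB_def by blast
  have UNE: "Ap \<union> RB \<union> Y \<noteq> {}" using ApNE by blast
  have finEi: "finite (edges_in E Z)" for Z using finE unfolding edges_in_def by simp
  have finG1: "finite G1" using G1sub finEi finite_subset by blast
  have finG2: "finite G2" unfolding G2_def using finEi by blast
  have "card G1 + card G2 = card (G1 \<union> G2)" using disj finG1 finG2 by (simp add: card_Un_disjoint)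
  also have "\<dots> \<le> card (edges_in E (Ap \<union> RB \<union> Y))" using sub finEi by (intro card_mono) auto
  finally have "card G1 + card G2 + 1 \<le> card (Ap \<union> RB \<union> Y)"
    using forest_edges[OF graph acyc UV UNE] by linarith
  also have "\<dots> \<le> card Ap + card RB + card Y" by (metis card_Un_le add_le_mono order_trans le_refl)
  finally show ?thesis using cG1 unfolding RB_def G2_def by simp
qed

lemma deg_edges: "deg E x = card {e \<in> E. x \<in> e}"
proof -
  have "(\<lambda>w. {w, x}) ` nbrs E x = {e \<in> E. x \<in> e}"
  proof
    show "(\<lambda>w. {w, x}) ` nbrs E x \<subseteq> {e \<in> E. x \<in> e}" unfolding nbrs_def by auto
    show "{e \<in> E. x \<in> e} \<subseteq> (\<lambda>w. {w, x}) ` nbrs E x"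
    proof
      fix e assume e: "e \<in> {e \<in> E. x \<in> e}"
      then obtain u w where uw: "e = {u, w}" using edge_AB by blast
      then have "e = {w, x} \<or> e = {u, x}" using e by auto
      then show "e \<in> (\<lambda>w. {w, x}) ` nbrs E x" using e unfolding nbrs_def by auto
    qed
  qed
  moreover have "inj_on (\<lambda>w. {w, x}) (nbrs E x)"
  proof (rule inj_onI)
    fix w w' assume w: "w \<in> nbrs E x" "w' \<in> nbrs E x" "{w, x} = {w', x}"
    have "w \<noteq> x" using w graph_edge_neq[OF graph] unfolding nbrs_def by blast
    then show "w = w'" using w(3) by (metis doubleton_eq_iff)
  qed
  ultimately show ?thesis unfolding deg_def by (metis card_image)
qed

definition EAS where "EAS = {e \<in> E. e \<inter> Ap \<noteq> {} \<and> e \<inter> S \<noteq> {}}"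

lemma LB: "(\<Sum>x\<in>Ap. deg E x) \<le> card F + card NX + card EAS"
proof -
  have finAp: "finite Ap" using finA Ap_sub finite_subset by blast
  have "(\<Sum>x\<in>Ap. deg E x) = card (\<Union>x\<in>Ap. {e \<in> E. x \<in> e})"
    unfolding deg_edges
  proof (rule card_UN_disjoint[symmetric, OF finAp])
    show "\<forall>i\<in>Ap. finite {e \<in> E. i \<in> e}" using finE by simp
    show "\<forall>i\<in>Ap. \<forall>j\<in>Ap. i \<noteq> j \<longrightarrow> {e \<in> E. i \<in> e} \<inter> {e \<in> E. j \<in> e} = {}"
      using edge_oneA Ap_sub by blast
  qed
  also have "\<dots> \<le> card (F \<union> NX \<union> EAS)"
  proof (rule card_mono)
    show "finite (F \<union> NX \<union> EAS)" using finF finNX finE unfolding EAS_def by simp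
    show "(\<Union>x\<in>Ap. {e \<in> E. x \<in> e}) \<subseteq> F \<union> NX \<union> EAS" unfolding F_def EAS_def by blast
  qed
  also have "\<dots> \<le> card F + card NX + card EAS" by (metis card_Un_le add_le_mono order_trans le_refl)
  finally show ?thesis .
qed

lemma EAS_sub: "EAS \<subseteq> edges_in E (Ap \<union> (S \<inter> B))"
proof
  fix e assume e: "e \<in> EAS"
  then have eE: "e \<in> E" unfolding EAS_def by blast
  obtain u w where uw: "e = {u, w}" "u \<in> A" "w \<in> B" using edge_AB[OF eE] by metis
  have "u \<in> Ap" using e uw Ap_sub AB unfolding EAS_def by auto
  then have "w \<in> S" using e uw unfolding EAS_def Ap_def by auto
  then show "e \<in> edges_in E (Ap \<union> (S \<inter> B))" using uw eE \<open>u \<in> Ap\<close> unfolding edges_in_def by auto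
qed

end


context core begin

lemma capC: assumes "finite C" shows "card (FC C) + 1 \<le> card C \<or> card (FC C) = 0"
proof (cases "R C = {}")
  case True
  then have "2 * card (FC C) \<le> card C" using W1[OF assms] by simp
  then show ?thesis by arith
next
  case False
  then show ?thesis using W1[OF assms] W4[OF False] by linarith
qed

lemma RS1: "R C1 \<inter> S = {}" and RS2: "R C2 \<inter> S = {}"
  using disjX1 disjX2 unfolding R_def S_def by blast+

lemma RA_Ap: assumes "R C \<inter> S = {}" shows "R C \<inter> A \<subseteq> Ap"
  using assms unfolding Ap_def by blast

lemma sum_split_AB: "(\<Sum>v\<in>R C. g v) = (\<Sum>v\<in>R C \<inter> A. g v) + (\<Sum>v\<in>R C \<inter> B. g v)"
  and card_split_AB: "card (R C) = card (R C \<inter> A) + card (R C \<inter> B)"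
proof -
  have eq: "R C = (R C \<inter> A) \<union> (R C \<inter> B)" using R_sub AB by blast
  have dj: "(R C \<inter> A) \<inter> (R C \<inter> B) = {}" using AB by blast
  have f1: "finite (R C \<inter> A)" "finite (R C \<inter> B)" using finR by auto
  show "(\<Sum>v\<in>R C. g v) = (\<Sum>v\<in>R C \<inter> A. g v) + (\<Sum>v\<in>R C \<inter> B. g v)"
    by (subst eq) (rule sum.union_disjoint[OF f1 dj])
  show "card (R C) = card (R C \<inter> A) + card (R C \<inter> B)"
    by (subst eq) (rule card_Un_disjoint[OF f1 dj])
qed

lemma no_edges_A: "edges_in E Z = {}" if "Z \<subseteq> A" for Z
proof -
  have "e \<notin> edges_in E Z" for e
  proof
    assume "e \<in> edges_in E Z"
    then have "e \<in> E" "e \<subseteq> Z" unfolding edges_in_def by auto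
    then obtain u w where "e = {u, w}" "w \<in> B" using edge_AB by metis
    then show False using \<open>e \<subseteq> Z\<close> that AB by auto
  qed
  then show ?thesis by blast
qed

theorem core_main:
  fixes k D1 D2 :: nat
  assumes k2: "2 \<le> k" and degA: "\<forall>x\<in>A. k \<le> deg E x" and cX: "card X + 1 \<le> card A"
    and hd1: "\<forall>u\<in>C1. card {w \<in> C1. w \<noteq> u \<and> {u, w} \<in> EG} \<le> D1"
    and hd2: "\<forall>u\<in>C2. card {w \<in> C2. w \<noteq> u \<and> {u, w} \<in> EG} \<le> D2"
    and Nk2: "k = 2 \<Longrightarrow> card C1 div 2 + card C2 div 2 \<le> 1 \<and> D1 \<le> 1 \<and> D2 \<le> 1"
    and Ncap: "(card C1 - 1) + (card C2 - 1) \<le> 2 * k - 2"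
    and N1: "D1 \<le> k - 1" "D2 \<le> k - 1" "card C1 div 2 + card C2 div 2 \<le> k - 1"
  shows "(\<exists>r1 r2. r1 + r2 \<le> (2::nat) \<and> 2 * k - 2 \<le> (card C1 + r1 * D1 - r1) div 2 + (card C2 + r2 * D2 - r2) div 2)
    \<and> (\<exists>x1 x2 y. x1 \<in> A \<and> x2 \<in> A \<and> x1 \<noteq> x2 \<and> deg E x1 = k \<and> deg E x2 = k \<and> y \<in> B \<and>
         {x1, y} \<in> E \<and> {x2, y} \<in> E \<and> phi y \<in> X \<and> (\<forall>x\<in>A - {x1, x2}. phi x \<in> X))"
proof -
  define n where "n = card Ap"
  define sA where "sA = card (S \<inter> A)"
  define sB where "sB = card (S \<inter> B)"
  define nx where "nx = card NX"
  define fF where "fF = card F"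
  define F1 where "F1 = card (FC C1)"
  define F2 where "F2 = card (FC C2)"
  define Dg where "Dg = (\<Sum>x\<in>Ap. deg E x)"
  have finAp: "finite Ap" using finA Ap_sub finite_subset by blast
  have cS: "card S = sA + sB"
  proof -
    have "S = (S \<inter> A) \<union> (S \<inter> B)" using S_sub AB by blast
    moreover have "(S \<inter> A) \<inter> (S \<inter> B) = {}" using AB by blast
    ultimately show ?thesis unfolding sA_def sB_def using finS by (metis card_Un_disjoint finite_Int)
  qed
  have cA: "card A = sA + n"
  proof -
    have "A = (S \<inter> A) \<union> Ap" unfolding Ap_def by blast
    moreover have "(S \<inter> A) \<inter> Ap = {}" unfolding Ap_def by blast
    ultimately show ?thesis unfolding sA_def n_def using finA finAp by (metis card_Un_disjoint finite_Int)
  qed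
  have bud: "sB + nx + 1 \<le> n" using budget cS cA cX unfolding nx_def by linarith
  have ApNE: "Ap \<noteq> {}" using bud unfolding n_def by auto
  have DgL: "k * n \<le> Dg"
  proof -
    have "of_nat (card Ap) * k \<le> Dg" unfolding Dg_def using degA Ap_sub sum_bounded_below[of Ap k "deg E"] by auto
    then show ?thesis unfolding n_def by (simp add: mult.commute)
  qed
  have LB': "Dg \<le> fF + nx + card EAS" unfolding Dg_def fF_def nx_def using LB .
  have finEi: "finite (edges_in E Z)" for Z using finE unfolding edges_in_def by simp
  have EASb: "card EAS + 1 \<le> n + sB"
  proof -
    have UV: "Ap \<union> (S \<inter> B) \<subseteq> V" using Ap_sub AB by blast
    have "card EAS \<le> card (edges_in E (Ap \<union> (S \<inter> B)))" using EAS_sub finEi by (intro card_mono) auto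
    moreover have "card (edges_in E (Ap \<union> (S \<inter> B))) + 1 \<le> card (Ap \<union> (S \<inter> B))"
      using forest_edges[OF graph acyc UV] ApNE by blast
    moreover have "card (Ap \<union> (S \<inter> B)) \<le> n + sB" unfolding n_def sB_def by (rule card_Un_le)
    ultimately show ?thesis by linarith
  qed
  have fF12: "fF \<le> F1 + F2"
  proof -
    have "F \<subseteq> FC C1 \<union> FC C2" using W0 by blast
    then have "card F \<le> card (FC C1 \<union> FC C2)" using finFC by (intro card_mono) auto
    also have "\<dots> \<le> F1 + F2" unfolding F1_def F2_def by (rule card_Un_le)
    finally show ?thesis unfolding fF_def .
  qed
  have cap: "fF \<le> 2 * k - 2"
    using capC[OF finC1] capC[OF finC2] fF12 Ncap unfolding F1_def F2_def by linarith
  have main_ineq: "Dg \<le> fF + 2 * n - 2" using LB' EASb bud by linarith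
  have W1s: "2 * card (FC C) \<le> card C" if "finite C" "\<forall>v\<in>R C. dC C v \<le> 1" for C
  proof -
    have "(\<Sum>v\<in>R C. dC C v) \<le> of_nat (card (R C)) * 1" using that(2) sum_bounded_above[of "R C" "dC C" 1] by auto
    then have "(\<Sum>v\<in>R C. dC C v) \<le> card (R C)" by simp
    then show ?thesis using W1[OF that(1)] by linarith
  qed
  show ?thesis
  proof (cases "k = 2")
    case True
    have d1: "\<forall>v\<in>R C1. dC C1 v \<le> 1"
    proof
      fix v assume v: "v \<in> R C1"
      have "phi v \<in> C1" using v unfolding R_def by blast
      then show "dC C1 v \<le> 1" using W2[OF finC1 _ v, of D1] hd1 Nk2[OF True] by fastforce
    qed
    have d2: "\<forall>v\<in>R C2. dC C2 v \<le> 1"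
    proof
      fix v assume v: "v \<in> R C2"
      have "phi v \<in> C2" using v unfolding R_def by blast
      then show "dC C2 v \<le> 1" using W2[OF finC2 _ v, of D2] hd2 Nk2[OF True] by fastforce
    qed
    have "F1 \<le> card C1 div 2" "F2 \<le> card C2 div 2"
      using W1s[OF finC1 d1] W1s[OF finC2 d2] unfolding F1_def F2_def by linarith+
    then have "fF \<le> 1" using fF12 Nk2[OF True] by linarith
    moreover have "2 * n \<le> fF + 2 * n - 2" using DgL main_ineq unfolding True by linarith
    ultimately show ?thesis using ApNE bud by - (rule FalseE, linarith)
  next
    case False
    then have k3: "3 \<le> k" using k2 by linarith
    have n2: "n \<le> 2"
    proof (rule ccontr)
      assume "\<not> n \<le> 2"
      then have n': "n = (n - 3) + 3" by arith
      have k': "k = (k - 3) + 3" using k3 by arith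
      have "k * n \<le> 2 * k - 2 + 2 * n - 2" using DgL main_ineq cap by linarith
      then have "((k - 3) + 3) * ((n - 3) + 3) \<le> 2 * ((k - 3) + 3) - 2 + 2 * ((n - 3) + 3) - 2"
        using n' k' by metis
      then show False by (simp add: algebra_simps)
    qed
    show ?thesis
    proof (cases "n = 1")
      case True
      then obtain x where Apx: "Ap = {x}" unfolding n_def by (meson card_1_singletonE)
      have sB0: "sB = 0" and nx0: "nx = 0" using bud True by auto
      have "card EAS = 0" using EASb True sB0 by linarith
      then have fk: "k \<le> fF" using DgL LB' nx0 unfolding True by simp
      have xA: "x \<in> A" using Apx Ap_sub by blast
      have Fx: "x \<in> e" if "e \<in> F" for e
      proof -
        have eE: "e \<in> E" using that F_sub by blast
        obtain u w where uw: "e = {u, w}" "u \<in> A" "w \<in> B" using edge_AB[OF eE] by metis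
        have "u \<notin> S" using that uw unfolding F_def by auto
        then have "u \<in> Ap" using uw unfolding Ap_def by blast
        then show ?thesis using uw Apx by auto
      qed
      show ?thesis
      proof (cases "x \<in> R C1")
        case True
        have "F \<subseteq> {e \<in> FC C1. x \<in> e}" using W0 W3[OF True] Fx by blast
        then have "fF \<le> dC C1 x" unfolding fF_def dC_def using finFC by (intro card_mono) auto
        also have "\<dots> \<le> D1"
        proof -
          have "phi x \<in> C1" using True unfolding R_def by blast
          then show ?thesis using W2[OF finC1 _ True, of D1] hd1 by fastforce
        qed
        finally show ?thesis using fk N1 k3 by - (rule FalseE, linarith)
      next
        case nR1: False
        show ?thesis
        proof (cases "x \<in> R C2")
          case True
          have "F \<subseteq> {e \<in> FC C2. x \<in> e}" using W0 W3'[OF True] Fx by blast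
          then have "fF \<le> dC C2 x" unfolding fF_def dC_def using finFC by (intro card_mono) auto
          also have "\<dots> \<le> D2"
          proof -
            have "phi x \<in> C2" using True unfolding R_def by blast
            then show ?thesis using W2[OF finC2 _ True, of D2] hd2 by fastforce
          qed
          finally show ?thesis using fk N1 k3 by - (rule FalseE, linarith)
        next
          case nR2: False
          have half: "2 * card (FC C) \<le> card C" if C: "finite C" "X \<inter> C = {}" "R C \<inter> S = {}" "x \<notin> R C" for C
          proof -
            have RA: "R C \<inter> A = {}" using RA_Ap[OF C(3)] Apx C(4) by auto
            have "(\<Sum>v\<in>R C \<inter> B. dC C v) + card (edges_in E (Ap \<union> {})) + 1 \<le> card Ap + card (R C \<inter> B) + card ({}::'a set)"
              using W5[of "{}" C] ApNE C(2) by simp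
            then have "(\<Sum>v\<in>R C \<inter> B. dC C v) \<le> card (R C \<inter> B)" using True unfolding n_def by simp
            then have "(\<Sum>v\<in>R C. dC C v) \<le> card (R C)" using sum_split_AB[where C=C and g="dC C"] card_split_AB[of C] RA by simp
            then show ?thesis using W1[OF C(1)] by linarith
          qed
          have "F1 \<le> card C1 div 2" using half[OF finC1 disjX1 RS1 nR1] unfolding F1_def by linarith
          moreover have "F2 \<le> card C2 div 2" using half[OF finC2 disjX2 RS2 nR2] unfolding F2_def by linarith
          ultimately show ?thesis using fF12 N1 fk k3 by - (rule FalseE, linarith)
        qed
      qed
    next
      case n_ne1: False
      have "n \<noteq> 0" using ApNE finAp unfolding n_def by simp
      then have n2': "n = 2" using n2 n_ne1 by arith
      then obtain x1 x2 where Ap12: "Ap = {x1, x2}" "x1 \<noteq> x2" unfolding n_def by (meson card_2_iff)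
      have x12A: "x1 \<in> A" "x2 \<in> A" using Ap12 Ap_sub by auto
      have Dg12: "Dg = deg E x1 + deg E x2" unfolding Dg_def Ap12(1) using Ap12(2) by simp
      have dk: "k \<le> deg E x1" "k \<le> deg E x2" using degA x12A by auto
      show ?thesis
      proof (cases "\<exists>y\<in>S \<inter> B. {x1, y} \<in> E \<and> {x2, y} \<in> E")
        case False
        have "nx + card EAS \<le> 1"
        proof (cases "sB = 0")
          case True
          then have "S \<inter> B = {}" unfolding sB_def using finS by simp
          then have "EAS = {}" using EAS_sub no_edges_A[OF Ap_sub] by simp
          then show ?thesis using bud True n2' by simp
        next
          case sB1: False
          then have "sB = 1" "nx = 0" using bud n2' by linarith+
          then obtain y where y: "S \<inter> B = {y}" unfolding sB_def by (meson card_1_singletonE)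
          have "EAS \<subseteq> {{x1, y}, {x2, y}} \<inter> E"
          proof
            fix e assume e: "e \<in> EAS"
            then have eE: "e \<in> E" unfolding EAS_def by blast
            have "e \<subseteq> {x1, x2, y}" using EAS_sub e Ap12 y unfolding edges_in_def by blast
            obtain u w where uw: "e = {u, w}" "u \<in> A" "w \<in> B" using edge_AB[OF eE] by metis
            have "w = y" using uw \<open>e \<subseteq> {x1, x2, y}\<close> x12A AB by auto
            moreover have "u = x1 \<or> u = x2" using uw \<open>e \<subseteq> {x1, x2, y}\<close> y AB by auto
            ultimately show "e \<in> {{x1, y}, {x2, y}} \<inter> E" using uw eE by auto
          qed
          moreover have "\<not> ({x1, y} \<in> E \<and> {x2, y} \<in> E)" using False y by blast
          ultimately have "EAS \<subseteq> {{x1, y}} \<or> EAS \<subseteq> {{x2, y}}" by blast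
          then have "card EAS \<le> 1" using card_mono[of "{{x1,y}}" EAS] card_mono[of "{{x2,y}}" EAS] by auto
          then show ?thesis using \<open>nx = 0\<close> by simp
        qed
        then show ?thesis using LB' Dg12 dk cap k3 by - (rule FalseE, linarith)
      next
        case True
        then obtain y where y: "y \<in> S" "y \<in> B" "{x1, y} \<in> E" "{x2, y} \<in> E" by blast
        have Dle: "Dg \<le> fF + 2" using main_ineq n2' by simp
        have dx: "deg E x1 = k" "deg E x2 = k" using Dle Dg12 dk cap k3 by linarith+
        have part2: "\<exists>x1 x2 y. x1 \<in> A \<and> x2 \<in> A \<and> x1 \<noteq> x2 \<and> deg E x1 = k \<and> deg E x2 = k \<and> y \<in> B \<and>
           {x1, y} \<in> E \<and> {x2, y} \<in> E \<and> phi y \<in> X \<and> (\<forall>x\<in>A - {x1, x2}. phi x \<in> X)"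
        proof (intro exI conjI)
          show "phi y \<in> X" using y unfolding S_def by blast
          show "\<forall>x\<in>A - {x1, x2}. phi x \<in> X" using Ap12 unfolding Ap_def S_def by blast
        qed (use x12A Ap12 dx y in auto)
        have e2: "card (edges_in E (Ap \<union> {y})) \<ge> 2"
        proof -
          have "{{x1, y}, {x2, y}} \<subseteq> edges_in E (Ap \<union> {y})" using y Ap12 unfolding edges_in_def by auto
          moreover have "{x1, y} \<noteq> {x2, y}" using Ap12(2) by (metis doubleton_eq_iff)
          ultimately show ?thesis using finEi by (metis card_2_iff card_mono)
        qed
        have blk: "2 * card (FC C) \<le> card C + card (R C \<inter> A) * D - card (R C \<inter> A)"
          if C: "finite C" "X \<inter> C = {}" "\<forall>u\<in>C. card {w \<in> C. w \<noteq> u \<and> {u, w} \<in> EG} \<le> D" for C D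
        proof -
          have "(\<Sum>v\<in>R C \<inter> B. dC C v) + card (edges_in E (Ap \<union> {y})) + 1 \<le> card Ap + card (R C \<inter> B) + card {y}"
            using W5[of "{y}" C] y ApNE C(2) by simp
          then have sB': "(\<Sum>v\<in>R C \<inter> B. dC C v) \<le> card (R C \<inter> B)" using e2 n2' unfolding n_def by simp
          have sA': "(\<Sum>v\<in>R C \<inter> A. dC C v) \<le> of_nat (card (R C \<inter> A)) * D"
          proof (rule sum_bounded_above)
            fix v assume v: "v \<in> R C \<inter> A"
            then have "phi v \<in> C" unfolding R_def by blast
            then show "dC C v \<le> D" using W2[OF C(1) _, of v D] C(3) v by fastforce
          qed
          have sA'': "(\<Sum>v\<in>R C \<inter> A. dC C v) \<le> card (R C \<inter> A) * D" using sA' by simp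
          show ?thesis using W1[OF C(1)] sum_split_AB[where C=C and g="dC C"] card_split_AB[of C] sA'' sB' by linarith
        qed
        define r1 where "r1 = card (R C1 \<inter> A)"
        define r2 where "r2 = card (R C2 \<inter> A)"
        have r12: "r1 + r2 \<le> 2"
        proof -
          have "(R C1 \<inter> A) \<union> (R C2 \<inter> A) \<subseteq> Ap" using RA_Ap[OF RS1] RA_Ap[OF RS2] by blast
          moreover have "(R C1 \<inter> A) \<inter> (R C2 \<inter> A) = {}" using disjC unfolding R_def by blast
          ultimately have "r1 + r2 \<le> card Ap" unfolding r1_def r2_def using finAp finR
            by (metis card_Un_disjoint card_mono finite_Int)
          then show ?thesis using n2' unfolding n_def by simp
        qed
        have "F1 \<le> (card C1 + r1 * D1 - r1) div 2" using blk[OF finC1 disjX1 hd1] unfolding F1_def r1_def by linarith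
        moreover have "F2 \<le> (card C2 + r2 * D2 - r2) div 2" using blk[OF finC2 disjX2 hd2] unfolding F2_def r2_def by linarith
        moreover have "2 * k - 2 \<le> fF" using Dle Dg12 dk by linarith
        ultimately have "2 * k - 2 \<le> (card C1 + r1 * D1 - r1) div 2 + (card C2 + r2 * D2 - r2) div 2"
          using fF12 by linarith
        then show ?thesis using part2 r12 by blast
      qed
    qed
  qed
qed

end


lemma part_edge:
  assumes disj: "\<forall>i<p. \<forall>i'<p. i \<noteq> i' \<longrightarrow> P i \<inter> P i' = {}"
    and un: "(\<Union>i<p. P i) = VG - X"
    and EG: "EG = EXX \<union> EW \<union> {{u, v} | u v. u \<in> X \<and> v \<in> VG - X} \<union>
           {{u, v} | u v i i'. i < p \<and> i' < p \<and> i \<noteq> i' \<and> u \<in> P i \<and> v \<in> P i'}"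
    and EXX: "\<forall>e\<in>EXX. e \<subseteq> X"
    and uv: "{u, v} \<in> EG" "i < p" "u \<in> P i" "v \<in> P i"
  shows "{u, v} \<in> EW"
proof -
  have nX: "u \<notin> X" "v \<notin> X" using uv un by blast+
  have c1: "{u, v} \<notin> EXX" using EXX nX by blast
  have c2: "{u, v} \<notin> {{u, v} | u v. u \<in> X \<and> v \<in> VG - X}"
  proof
    assume "{u, v} \<in> {{u, v} | u v. u \<in> X \<and> v \<in> VG - X}"
    then obtain u' v' where "{u, v} = {u', v'}" "u' \<in> X" by blast
    then show False using nX by (metis doubleton_eq_iff)
  qed
  have c3: "{u, v} \<notin> {{u, v} | u v i i'. i < p \<and> i' < p \<and> i \<noteq> i' \<and> u \<in> P i \<and> v \<in> P i'}"
  proof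
    assume "{u, v} \<in> {{u, v} | u v i i'. i < p \<and> i' < p \<and> i \<noteq> i' \<and> u \<in> P i \<and> v \<in> P i'}"
    then obtain u' v' i1 i2 where w: "{u, v} = {u', v'}" "i1 < p" "i2 < p" "i1 \<noteq> i2" "u' \<in> P i1" "v' \<in> P i2"
      by blast
    have same: "i1 = i" if "z \<in> P i1" "z \<in> P i" "i1 < p" for z i1
    proof (rule ccontr)
      assume "i1 \<noteq> i"
      then have "P i1 \<inter> P i = {}" using disj that(3) uv(2) by blast
      then show False using that by blast
    qed
    have "(u' = u \<and> v' = v) \<or> (u' = v \<and> v' = u)" using w(1) by (metis doubleton_eq_iff)
    then show False
    proof
      assume "u' = u \<and> v' = v"
      then show False using same[of u i1] same[of v i2] w uv by auto
    next
      assume "u' = v \<and> v' = u"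
      then show False using same[of v i1] same[of u i2] w uv by auto
    qed
  qed
  show ?thesis using uv(1) c1 c2 c3 unfolding EG by blast
qed

lemma top_edge:
  assumes un: "(\<Union>i<p. P i) = VG - X"
    and EG: "EG = EXX \<union> EW \<union> {{u, v} | u v. u \<in> X \<and> v \<in> VG - X} \<union>
           {{u, v} | u v i i'. i < p \<and> i' < p \<and> i \<noteq> i' \<and> u \<in> P i \<and> v \<in> P i'}"
    and EW: "\<forall>e\<in>EW. e \<subseteq> W" and W: "W \<inter> X = {}"
    and uv: "{u, v} \<in> EG" "u \<in> X" "v \<in> X"
  shows "{u, v} \<in> EXX"
proof -
  have c1: "{u, v} \<notin> EW" using EW W uv by blast
  have c2: "{u, v} \<notin> {{u, v} | u v. u \<in> X \<and> v \<in> VG - X}"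
  proof
    assume "{u, v} \<in> {{u, v} | u v. u \<in> X \<and> v \<in> VG - X}"
    then obtain u' v' where "{u, v} = {u', v'}" "v' \<notin> X" by blast
    then show False using uv by (metis doubleton_eq_iff)
  qed
  have c3: "{u, v} \<notin> {{u, v} | u v i i'. i < p \<and> i' < p \<and> i \<noteq> i' \<and> u \<in> P i \<and> v \<in> P i'}"
  proof
    assume "{u, v} \<in> {{u, v} | u v i i'. i < p \<and> i' < p \<and> i \<noteq> i' \<and> u \<in> P i \<and> v \<in> P i'}"
    then obtain u' v' i1 where w: "{u, v} = {u', v'}" "i1 < p" "u' \<in> P i1" by blast
    then have "u' \<notin> X" using un by blast
    then show False using w(1) uv by (metis doubleton_eq_iff)
  qed
  show ?thesis using uv(1) c1 c2 c3 unfolding EG by blast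
qed

lemma pigeon:
  assumes un: "(\<Union>i<p. P i) = VG - X" and Q: "Q \<subseteq> VG" "Q \<inter> X = {}" "card Q = p + 1"
  shows "\<exists>i<p. \<exists>u\<in>Q. \<exists>v\<in>Q. u \<noteq> v \<and> u \<in> P i \<and> v \<in> P i"
proof (rule ccontr)
  assume no: "\<not> ?thesis"
  have le1: "card (Q \<inter> P i) \<le> 1" if "i < p" for i
  proof (rule ccontr)
    assume "\<not> card (Q \<inter> P i) \<le> 1"
    then have "2 \<le> card (Q \<inter> P i)" by simp
    then obtain Z where "Z \<subseteq> Q \<inter> P i" "card Z = 2" by (meson obtain_subset_with_card_n)
    then obtain u v where "u \<in> Q \<inter> P i" "v \<in> Q \<inter> P i" "u \<noteq> v" by (auto simp: card_2_iff)
    then show False using no that by blast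
  qed
  have "Q = (\<Union>i<p. Q \<inter> P i)" using Q un by blast
  then have "card Q \<le> (\<Sum>i<p. card (Q \<inter> P i))" by (metis card_UN_le finite_lessThan)
  also have "\<dots> \<le> (\<Sum>i<p. 1)" by (rule sum_mono) (use le1 in auto)
  finally show False using Q by simp
qed


lemma fam_setup:
  assumes tree: "is_tree V E" and col: "colour_classes V E A B" and p3: "p \<ge> 3"
    and finVG: "finite VG" and XV: "X \<subseteq> VG"
    and disj: "\<forall>i<p. \<forall>i'<p. i \<noteq> i' \<longrightarrow> P i \<inter> P i' = {}"
    and un: "(\<Union>i<p. P i) = VG - X"
    and j: "j < p" and WP: "W \<subseteq> P j"
    and EG: "EG = EXX \<union> EW \<union> {{u, v} | u v. u \<in> X \<and> v \<in> VG - X} \<union>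
           {{u, v} | u v i i'. i < p \<and> i' < p \<and> i \<noteq> i' \<and> u \<in> P i \<and> v \<in> P i'}"
    and EXX: "\<forall>e\<in>EXX. e \<subseteq> X" and EW: "\<forall>e\<in>EW. e \<subseteq> W"
    and W12: "W = C1 \<union> C2" "C1 \<inter> C2 = {}" and cross: "\<forall>u\<in>C1. \<forall>v\<in>C2. {u, v} \<notin> EW"
    and sub: "subgraph_of (blowup_V V E p) (blowup_E V E p) VG EG"
  shows "\<exists>f. core V E A B p VG EG X C1 C2 f"
    and "\<forall>u\<in>W. \<forall>w\<in>W. {u, w} \<in> EG \<longrightarrow> {u, w} \<in> EW"
    and "\<forall>u\<in>X. \<forall>v\<in>X. {u, v} \<in> EG \<longrightarrow> {u, v} \<in> EXX"
proof -
  have WX: "W \<inter> X = {}" using WP un j by blast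
  have inner: "{u, w} \<in> EW" if "u \<in> W" "w \<in> W" "{u, w} \<in> EG" for u w
    using part_edge[OF disj un EG EXX that(3) j] that WP by blast
  show "\<forall>u\<in>W. \<forall>w\<in>W. {u, w} \<in> EG \<longrightarrow> {u, w} \<in> EW" using inner by blast
  show "\<forall>u\<in>X. \<forall>v\<in>X. {u, v} \<in> EG \<longrightarrow> {u, v} \<in> EXX"
    using top_edge[OF un EG EW WX] by blast
  obtain f where f: "inj_on f (blowup_V V E p)" "f ` blowup_V V E p \<subseteq> VG" "\<forall>e\<in>blowup_E V E p. f ` e \<in> EG"
    using sub unfolding subgraph_of_def by blast
  have p1: "p \<ge> 1" using p3 by simp
  have finX: "finite X" using XV finVG finite_subset by blast
  have "P j \<subseteq> VG - X" using un j by blast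
  then have "W \<subseteq> VG" using WP by blast
  then have finW: "finite W" using finVG finite_subset by blast
  have finC1: "finite C1" and finC2: "finite C2" using finW W12 by auto
  have dX1: "X \<inter> C1 = {}" and dX2: "X \<inter> C2 = {}" using WX W12 by auto
  have hQ: "\<exists>u\<in>Q. \<exists>v\<in>Q. u \<noteq> v \<and> u \<in> C1 \<union> C2 \<and> v \<in> C1 \<union> C2"
    if Qa: "Q \<subseteq> VG" "card Q = p + 1" "\<forall>u\<in>Q. \<forall>v\<in>Q. u \<noteq> v \<longrightarrow> {u, v} \<in> EG" "Q \<inter> X = {}" for Q
  proof -
    obtain i u v where iuv: "i < p" "u \<in> Q" "v \<in> Q" "u \<noteq> v" "u \<in> P i" "v \<in> P i"
      using pigeon[OF un Qa(1) Qa(4) Qa(2)] by blast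
    have "{u, v} \<in> EW" using part_edge[OF disj un EG EXX _ iuv(1,5,6)] Qa(3) iuv(2,3,4) by blast
    then have "u \<in> W" "v \<in> W" using EW by blast+
    then show ?thesis using iuv W12 by blast
  qed
  have hcross: "{u, v} \<notin> EG" if "u \<in> C1" "v \<in> C2" for u v
  proof
    assume "{u, v} \<in> EG"
    then have "{u, v} \<in> EW" using inner that W12 by blast
    then show False using cross that by blast
  qed
  show "\<exists>f. core V E A B p VG EG X C1 C2 f"
    by (rule exI, rule core.intro[OF tree col p1 finX finC1 finC2 W12(2) dX1 dX2 hQ hcross f(1) f(2) f(3)])
qed


lemma almost_reg_deg:
  assumes ar: "almost_regular d W EW" and u: "u \<in> W"
  shows "card {w \<in> C. w \<noteq> u \<and> {u, w} \<in> EW} \<le> d"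
proof -
  have g: "is_graph W EW" and dg: "deg EW u = d \<or> deg EW u = d - 1" using ar u unfolding almost_regular_def by auto
  have sub: "{w \<in> C. w \<noteq> u \<and> {u, w} \<in> EW} \<subseteq> nbrs EW u" unfolding nbrs_def by (auto simp: insert_commute)
  have "nbrs EW u \<subseteq> W" unfolding nbrs_def using graph_edge_neq(2)[OF g] by blast
  then have "finite (nbrs EW u)" using g unfolding is_graph_def using finite_subset by blast
  then have "card {w \<in> C. w \<noteq> u \<and> {u, w} \<in> EW} \<le> deg EW u" unfolding deg_def using sub card_mono by blast
  then show ?thesis using dg by linarith
qed

lemma complete_sub: "e \<in> complete_edges Z \<Longrightarrow> e \<subseteq> Z" unfolding complete_edges_def by blast

lemma graph_sub: assumes "is_graph W EW" "e \<in> EW" shows "e \<subseteq> W"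
proof -
  obtain u v where "u \<in> W" "v \<in> W" "e = {u, v}" using assms unfolding is_graph_def by meson
  then show ?thesis by simp
qed

lemma card_others: assumes "finite Z" "card Z = m" "u \<in> Z"
  shows "card {w \<in> Z. w \<noteq> u \<and> P w} \<le> m - 1"
proof -
  have "{w \<in> Z. w \<noteq> u \<and> P w} \<subseteq> Z - {u}" by blast
  then have "card {w \<in> Z. w \<noteq> u \<and> P w} \<le> card (Z - {u})" using assms by (intro card_mono) auto
  then show ?thesis using assms by simp
qed

lemma arith_H1:
  assumes "(2::nat) \<le> k" "r1 + r2 \<le> (2::nat)"
    "2 * k - 2 \<le> (2 * k - 1 + r1 * (k - 1) - r1) div 2 + (0 + r2 * 0 - r2) div 2"
  shows False
proof -
  have c0: False if "r1 = 0" using assms unfolding that by (simp; presburger)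
  have c1: False if "r1 = 1" using assms unfolding that by (simp; presburger)
  have c2: False if "r1 = 2" using assms unfolding that by (simp; presburger)
  have "r1 = 0 \<or> r1 = 1 \<or> r1 = 2" using assms by arith
  then show False using c0 c1 c2 by blast
qed

lemma arith_H2e:
  assumes "(2::nat) \<le> k" "even k" "r1 + r2 \<le> (2::nat)"
    "2 * k - 2 \<le> (k + 1 + r1 * (k - 1) - r1) div 2 + (k - 1 + r2 * (k - 2) - r2) div 2"
  shows False
proof -
  obtain m where m: "k = 2 * m" using assms(2) by blast
  have h: "2 * (2 * m) - 2 \<le> (2 * m + 1 + r1 * (2 * m - 1) - r1) div 2 + (2 * m - 1 + r2 * (2 * m - 2) - r2) div 2"
    using assms(4) unfolding m .
  have m1: "1 \<le> m" using assms(1) m by simp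
  have c00: False if "r1 = 0" "r2 = 0" using h m1 unfolding that by (simp; presburger)
  have c01: False if "r1 = 0" "r2 = 1" using h m1 unfolding that by (simp; presburger)
  have c02: False if "r1 = 0" "r2 = 2" using h m1 unfolding that by (simp; presburger)
  have c10: False if "r1 = 1" "r2 = 0" using h m1 unfolding that by (simp; presburger)
  have c11: False if "r1 = 1" "r2 = 1" using h m1 unfolding that by (simp; presburger)
  have c20: False if "r1 = 2" "r2 = 0" using h m1 unfolding that by (simp; presburger)
  have "(r1 = 0 \<and> r2 = 0) \<or> (r1 = 0 \<and> r2 = 1) \<or> (r1 = 0 \<and> r2 = 2) \<or> (r1 = 1 \<and> r2 = 0) \<or> (r1 = 1 \<and> r2 = 1) \<or> (r1 = 2 \<and> r2 = 0)"
    using assms(3) by arith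
  then show False using c00 c01 c02 c10 c11 c20 by blast
qed

lemma arith_odd:
  assumes "odd (k::nat)" shows "k div 2 + k div 2 \<le> k - 1" "(k - 1) + (k - 1) \<le> 2 * k - 2"
proof -
  obtain m where m: "k = 2 * m + 1" using assms oddE by blast
  show "k div 2 + k div 2 \<le> k - 1" "(k - 1) + (k - 1) \<le> 2 * k - 2" unfolding m by simp_all
qed

lemma in_familyE:
  assumes "in_family topg emb n p a VG EG"
  obtains X EXX P j W EW where "finite VG" "card VG = n" "X \<subseteq> VG" "card X = a - 1"
      "\<forall>i<p. P i \<noteq> {}"
      "\<forall>i<p. \<forall>i'<p. i \<noteq> i' \<longrightarrow> P i \<inter> P i' = {}" "(\<Union>i<p. P i) = VG - X"
      "topg X EXX" "j < p" "W \<subseteq> P j" "emb W EW"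
      "EG = EXX \<union> EW \<union> {{u, v} | u v. u \<in> X \<and> v \<in> VG - X} \<union>
           {{u, v} | u v i i'. i < p \<and> i' < p \<and> i \<noteq> i' \<and> u \<in> P i \<and> v \<in> P i'}"
  using assms unfolding in_family_def
  apply (elim exE conjE)
  apply (rule that)
  apply assumption+
  done

lemma H1_free:
  assumes tree: "is_tree V E" and col: "colour_classes V E A B" and p3: "p \<ge> 3"
    and k2: "2 \<le> k" and degA: "\<forall>x\<in>A. k \<le> deg E x" and a: "a = card A" and Ane: "A \<noteq> {}"
    and H: "H1 n p a k VG EG"
  shows "blowup_free V E p VG EG"
  unfolding blowup_free_def
proof
  assume sub: "subgraph_of (blowup_V V E p) (blowup_E V E p) VG EG"
  have H': "in_family (\<lambda>X EXX. EXX = complete_edges X) (emb_L1 k) n p a VG EG" using H unfolding H1_def .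
  obtain X EXX P j W EW where fam: "finite VG" "card VG = n" "X \<subseteq> VG" "card X = a - 1"
      "\<forall>i<p. P i \<noteq> {}"
      "\<forall>i<p. \<forall>i'<p. i \<noteq> i' \<longrightarrow> P i \<inter> P i' = {}" "(\<Union>i<p. P i) = VG - X"
      "EXX = complete_edges X" "j < p" "W \<subseteq> P j" "emb_L1 k W EW"
      "EG = EXX \<union> EW \<union> {{u, v} | u v. u \<in> X \<and> v \<in> VG - X} \<union>
           {{u, v} | u v i i'. i < p \<and> i' < p \<and> i \<noteq> i' \<and> u \<in> P i \<and> v \<in> P i'}"
    by (rule in_familyE[OF H'])
  have ar: "almost_regular (k - 1) W EW" and cW: "card W = 2 * k - 1" using fam(11) unfolding emb_L1_def by auto
  have gW: "is_graph W EW" using ar unfolding almost_regular_def by simp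
  have EXXs: "\<forall>e\<in>EXX. e \<subseteq> X" using fam(8) complete_sub by blast
  have EWs: "\<forall>e\<in>EW. e \<subseteq> W" using graph_sub[OF gW] by blast
  have W12: "W = W \<union> {}" "W \<inter> {} = {}" by auto
  have cross: "\<forall>u\<in>W. \<forall>v\<in>{}. {u, v} \<notin> EW" by blast
  note st = fam_setup[OF tree col p3 fam(1,3,6,7,9,10,12) EXXs EWs W12 cross sub]
  obtain f where C: "core V E A B p VG EG X W {} f" using st(1) by blast
  have hd1: "\<forall>u\<in>W. card {w \<in> W. w \<noteq> u \<and> {u, w} \<in> EG} \<le> k - 1"
  proof
    fix u assume u: "u \<in> W"
    have "finite W" using gW unfolding is_graph_def by simp
    moreover have "{w \<in> W. w \<noteq> u \<and> {u, w} \<in> EG} \<subseteq> {w \<in> W. w \<noteq> u \<and> {u, w} \<in> EW}"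
      using st(2) u by blast
    ultimately have "card {w \<in> W. w \<noteq> u \<and> {u, w} \<in> EG} \<le> card {w \<in> W. w \<noteq> u \<and> {u, w} \<in> EW}"
      by (intro card_mono) auto
    then show "card {w \<in> W. w \<noteq> u \<and> {u, w} \<in> EG} \<le> k - 1" using almost_reg_deg[OF ar u, of W] by linarith
  qed
  have hd2: "\<forall>u\<in>{}. card {w \<in> {}. w \<noteq> u \<and> {u, w} \<in> EG} \<le> (0::nat)" by simp
  have cX: "card X + 1 \<le> card A" using fam(4) a Ane core.finA[OF C] by (simp add: card_gt_0_iff)
  have res: "\<exists>r1 r2. r1 + r2 \<le> (2::nat) \<and> 2 * k - 2 \<le> (card W + r1 * (k - 1) - r1) div 2 + (card ({}::'b set) + r2 * 0 - r2) div 2"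
  proof -
    have Nk2: "k = 2 \<Longrightarrow> card W div 2 + card ({}::'b set) div 2 \<le> 1 \<and> k - 1 \<le> 1 \<and> (0::nat) \<le> 1"
      using cW by simp
    have Ncap: "(card W - 1) + (card ({}::'b set) - 1) \<le> 2 * k - 2" using cW by simp
    have N1: "k - 1 \<le> k - 1" "(0::nat) \<le> k - 1" "card W div 2 + card ({}::'b set) div 2 \<le> k - 1"
      using cW by auto
    show ?thesis using core.core_main[OF C k2 degA cX hd1 hd2 Nk2 Ncap N1] by blast
  qed
  then obtain r1 r2 where r: "r1 + r2 \<le> (2::nat)" "2 * k - 2 \<le> (2 * k - 1 + r1 * (k - 1) - r1) div 2 + (0 + r2 * 0 - r2) div 2"
    using cW by auto
  show False using arith_H1[OF k2 r] .
qed


lemma L2odd_ystruct: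
  assumes tree: "is_tree V E" and col: "colour_classes V E A B" and p3: "p \<ge> 3"
    and k2: "2 \<le> k" and degA: "\<forall>x\<in>A. k \<le> deg E x" and a: "a = card A" and Ane: "A \<noteq> {}"
    and odd: "odd k"
    and H: "in_family topg (emb_L2 k) n p a VG EG" and topE: "\<forall>X EXX. topg X EXX \<longrightarrow> (\<forall>e\<in>EXX. e \<subseteq> X)"
    and sub: "subgraph_of (blowup_V V E p) (blowup_E V E p) VG EG"
  shows "\<exists>f X EXX C1 C2. core V E A B p VG EG X C1 C2 f \<and> topg X EXX \<and>
     (\<forall>u\<in>X. \<forall>v\<in>X. {u, v} \<in> EG \<longrightarrow> {u, v} \<in> EXX) \<and>
     (\<exists>x1 x2 y. x1 \<in> A \<and> x2 \<in> A \<and> x1 \<noteq> x2 \<and> deg E x1 = k \<and> deg E x2 = k \<and> y \<in> B \<and>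
         {x1, y} \<in> E \<and> {x2, y} \<in> E \<and> core.phi f y \<in> X \<and> (\<forall>x\<in>A - {x1, x2}. core.phi f x \<in> X))"
proof -
  obtain X EXX P j W EW where fam: "finite VG" "card VG = n" "X \<subseteq> VG" "card X = a - 1"
      "\<forall>i<p. P i \<noteq> {}"
      "\<forall>i<p. \<forall>i'<p. i \<noteq> i' \<longrightarrow> P i \<inter> P i' = {}" "(\<Union>i<p. P i) = VG - X"
      "topg X EXX" "j < p" "W \<subseteq> P j" "emb_L2 k W EW"
      "EG = EXX \<union> EW \<union> {{u, v} | u v. u \<in> X \<and> v \<in> VG - X} \<union>
           {{u, v} | u v i i'. i < p \<and> i' < p \<and> i \<noteq> i' \<and> u \<in> P i \<and> v \<in> P i'}"
    by (rule in_familyE[OF H])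
  obtain W1 W2 where W: "W = W1 \<union> W2" "W1 \<inter> W2 = {}" "card W1 = k" "card W2 = k"
      "EW = complete_edges W1 \<union> complete_edges W2"
    using fam(11) odd unfolding emb_L2_def by auto
  have EXXs: "\<forall>e\<in>EXX. e \<subseteq> X" using topE fam(8) by blast
  have EWs: "\<forall>e\<in>EW. e \<subseteq> W" using W(1,5) complete_sub by blast
  have cross: "\<forall>u\<in>W1. \<forall>v\<in>W2. {u, v} \<notin> EW"
  proof (intro ballI)
    fix u v assume uv: "u \<in> W1" "v \<in> W2"
    show "{u, v} \<notin> EW"
    proof
      assume "{u, v} \<in> EW"
      then have "{u, v} \<subseteq> W1 \<or> {u, v} \<subseteq> W2" using W(5) complete_sub by blast
      then show False using uv W(2) by blast
    qed
  qed
  note st = fam_setup[OF tree col p3 fam(1,3,6,7,9,10,12) EXXs EWs W(1,2) cross sub]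
  obtain f where C: "core V E A B p VG EG X W1 W2 f" using st(1) by blast
  have finW: "finite W1" "finite W2" using core.finC1[OF C] core.finC2[OF C] .
  have hd1: "\<forall>u\<in>W1. card {w \<in> W1. w \<noteq> u \<and> {u, w} \<in> EG} \<le> k - 1"
  proof
    fix u assume u: "u \<in> W1"
    show "card {w \<in> W1. w \<noteq> u \<and> {u, w} \<in> EG} \<le> k - 1"
      using card_others[OF finW(1) W(3) u, where P="\<lambda>w. {u, w} \<in> EG"] by simp
  qed
  have hd2: "\<forall>u\<in>W2. card {w \<in> W2. w \<noteq> u \<and> {u, w} \<in> EG} \<le> k - 1"
  proof
    fix u assume u: "u \<in> W2"
    show "card {w \<in> W2. w \<noteq> u \<and> {u, w} \<in> EG} \<le> k - 1"
      using card_others[OF finW(2) W(4) u, where P="\<lambda>w. {u, w} \<in> EG"] by simp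
  qed
  have cX: "card X + 1 \<le> card A" using fam(4) a Ane core.finA[OF C] by (simp add: card_gt_0_iff)
  have Nk2: "k = 2 \<Longrightarrow> card W1 div 2 + card W2 div 2 \<le> 1 \<and> k - 1 \<le> 1 \<and> k - 1 \<le> 1"
    using odd by simp
  have Ncap: "(card W1 - 1) + (card W2 - 1) \<le> 2 * k - 2" using W(3,4) arith_odd[OF odd] by simp
  have N1: "k - 1 \<le> k - 1" "k - 1 \<le> k - 1" "card W1 div 2 + card W2 div 2 \<le> k - 1"
    using W(3,4) arith_odd[OF odd] by auto
  have res: "\<exists>x1 x2 y. x1 \<in> A \<and> x2 \<in> A \<and> x1 \<noteq> x2 \<and> deg E x1 = k \<and> deg E x2 = k \<and> y \<in> B \<and>
         {x1, y} \<in> E \<and> {x2, y} \<in> E \<and> core.phi f y \<in> X \<and> (\<forall>x\<in>A - {x1, x2}. core.phi f x \<in> X)"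
    using core.core_main[OF C k2 degA cX hd1 hd2 Nk2 Ncap N1] by blast
  show ?thesis using C fam(8) st(3) res by blast
qed

lemma y_in_B0:
  assumes tree: "is_tree V E" and A0: "A0 = {x \<in> A. deg E x = k}"
    and B0: "B0 = {y \<in> B. card (nbrs E y \<inter> A0) \<ge> 2}"
    and y: "x1 \<in> A" "x2 \<in> A" "x1 \<noteq> x2" "deg E x1 = k" "deg E x2 = k" "y \<in> B" "{x1, y} \<in> E" "{x2, y} \<in> E"
  shows "y \<in> B0"
proof -
  have g: "is_graph V E" using tree unfolding is_tree_def by simp
  have "nbrs E y \<subseteq> V" unfolding nbrs_def using graph_edge_neq(2)[OF g] by blast
  then have fin: "finite (nbrs E y \<inter> A0)" using g unfolding is_graph_def using finite_subset by blast
  have "{x1, x2} \<subseteq> nbrs E y \<inter> A0" using y unfolding nbrs_def A0 by auto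
  then have "card {x1, x2} \<le> card (nbrs E y \<inter> A0)" using fin by (rule card_mono[rotated])
  then show ?thesis using y unfolding B0 by simp
qed

lemma H2_free:
  assumes tree: "is_tree V E" and col: "colour_classes V E A B" and p3: "p \<ge> 3"
    and k2: "2 \<le> k" and degA: "\<forall>x\<in>A. k \<le> deg E x" and a: "a = card A" and Ane: "A \<noteq> {}"
    and A0: "A0 = {x \<in> A. deg E x = k}" and B0: "B0 = {y \<in> B. card (nbrs E y \<inter> A0) \<ge> 2}"
    and kB: "even k \<or> B0 = {}"
    and H: "H2 n p a k VG EG"
  shows "blowup_free V E p VG EG"
  unfolding blowup_free_def
proof
  assume sub: "subgraph_of (blowup_V V E p) (blowup_E V E p) VG EG"
  have H': "in_family (\<lambda>X EXX. EXX = complete_edges X) (emb_L2 k) n p a VG EG" using H unfolding H2_def .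
  have topE: "\<forall>X EXX. (\<lambda>X EXX. EXX = complete_edges X) X EXX \<longrightarrow> (\<forall>e\<in>EXX. e \<subseteq> X)"
    using complete_sub by blast
  show False
  proof (cases "even k")
    case False
    then have B0e: "B0 = {}" using kB by simp
    obtain f X EXX C1 C2 x1 x2 y where r: "x1 \<in> A" "x2 \<in> A" "x1 \<noteq> x2" "deg E x1 = k" "deg E x2 = k" "y \<in> B"
         "{x1, y} \<in> E" "{x2, y} \<in> E"
      using L2odd_ystruct[OF tree col p3 k2 degA a Ane False H' topE sub] by blast
    have "y \<in> B0" using y_in_B0[OF tree A0 B0 r] .
    then show False using B0e by simp
  next
    case True
    obtain X EXX P j W EW where fam: "finite VG" "card VG = n" "X \<subseteq> VG" "card X = a - 1"
        "\<forall>i<p. P i \<noteq> {}"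
        "\<forall>i<p. \<forall>i'<p. i \<noteq> i' \<longrightarrow> P i \<inter> P i' = {}" "(\<Union>i<p. P i) = VG - X"
        "EXX = complete_edges X" "j < p" "W \<subseteq> P j" "emb_L2 k W EW"
        "EG = EXX \<union> EW \<union> {{u, v} | u v. u \<in> X \<and> v \<in> VG - X} \<union>
             {{u, v} | u v i i'. i < p \<and> i' < p \<and> i \<noteq> i' \<and> u \<in> P i \<and> v \<in> P i'}"
      by (rule in_familyE[OF H'])
    obtain W1 W2 E1 where W: "W = W1 \<union> W2" "W1 \<inter> W2 = {}" "card W1 = k + 1" "almost_regular (k - 1) W1 E1"
        "card W2 = k - 1" "EW = E1 \<union> complete_edges W2"
      using fam(11) True unfolding emb_L2_def by auto
    have gW1: "is_graph W1 E1" using W(4) unfolding almost_regular_def by simp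
    have EXXs: "\<forall>e\<in>EXX. e \<subseteq> X" using fam(8) complete_sub by blast
    have EWs: "\<forall>e\<in>EW. e \<subseteq> W" using W(1,6) complete_sub graph_sub[OF gW1] by blast
    have cross: "\<forall>u\<in>W1. \<forall>v\<in>W2. {u, v} \<notin> EW"
    proof (intro ballI)
      fix u v assume uv: "u \<in> W1" "v \<in> W2"
      show "{u, v} \<notin> EW"
      proof
        assume "{u, v} \<in> EW"
        then have "{u, v} \<subseteq> W1 \<or> {u, v} \<subseteq> W2" using W(6) complete_sub graph_sub[OF gW1] by blast
        then show False using uv W(2) by blast
      qed
    qed
    note st = fam_setup[OF tree col p3 fam(1,3,6,7,9,10,12) EXXs EWs W(1,2) cross sub]
    obtain f where C: "core V E A B p VG EG X W1 W2 f" using st(1) by blast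
    have finW: "finite W1" "finite W2" using core.finC1[OF C] core.finC2[OF C] .
    have hd1: "\<forall>u\<in>W1. card {w \<in> W1. w \<noteq> u \<and> {u, w} \<in> EG} \<le> k - 1"
    proof
      fix u assume u: "u \<in> W1"
      have "{w \<in> W1. w \<noteq> u \<and> {u, w} \<in> EG} \<subseteq> {w \<in> W1. w \<noteq> u \<and> {u, w} \<in> E1}"
      proof
        fix w assume w: "w \<in> {w \<in> W1. w \<noteq> u \<and> {u, w} \<in> EG}"
        then have "{u, w} \<in> EW" using st(2) u W(1) by blast
        moreover have "{u, w} \<notin> complete_edges W2" using complete_sub u W(2) by blast
        ultimately show "w \<in> {w \<in> W1. w \<noteq> u \<and> {u, w} \<in> E1}" using w W(6) by blast
      qed
      then have "card {w \<in> W1. w \<noteq> u \<and> {u, w} \<in> EG} \<le> card {w \<in> W1. w \<noteq> u \<and> {u, w} \<in> E1}"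
        using finW by (intro card_mono) auto
      then show "card {w \<in> W1. w \<noteq> u \<and> {u, w} \<in> EG} \<le> k - 1" using almost_reg_deg[OF W(4) u, of W1] by linarith
    qed
    have hd2: "\<forall>u\<in>W2. card {w \<in> W2. w \<noteq> u \<and> {u, w} \<in> EG} \<le> k - 2"
    proof
    fix u assume u: "u \<in> W2"
    show "card {w \<in> W2. w \<noteq> u \<and> {u, w} \<in> EG} \<le> k - 2"
      using card_others[OF finW(2) W(5) u, where P="\<lambda>w. {u, w} \<in> EG"] by simp
  qed
    have cX: "card X + 1 \<le> card A" using fam(4) a Ane core.finA[OF C] by (simp add: card_gt_0_iff)
    obtain m where m: "k = 2 * m" using True by blast
    have Nk2: "k = 2 \<Longrightarrow> card W1 div 2 + card W2 div 2 \<le> 1 \<and> k - 1 \<le> 1 \<and> k - 2 \<le> 1"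
      using W(3,5) by simp
    have Ncap: "(card W1 - 1) + (card W2 - 1) \<le> 2 * k - 2" using W(3,5) k2 by simp
    have N1: "k - 1 \<le> k - 1" "k - 2 \<le> k - 1" "card W1 div 2 + card W2 div 2 \<le> k - 1"
    proof -
      have c: "card W1 = 2 * m + 1" "card W2 = 2 * m - 1" using W(3,5) m by auto
      have m1: "1 \<le> m" using k2 m by simp
      show "k - 1 \<le> k - 1" by simp
      show "k - 2 \<le> k - 1" by simp
      show "card W1 div 2 + card W2 div 2 \<le> k - 1" unfolding c m using m1 by presburger
    qed
    obtain r1 r2 where r: "r1 + r2 \<le> (2::nat)"
        "2 * k - 2 \<le> (card W1 + r1 * (k - 1) - r1) div 2 + (card W2 + r2 * (k - 2) - r2) div 2"
      using core.core_main[OF C k2 degA cX hd1 hd2 Nk2 Ncap N1] by blast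
    have "2 * k - 2 \<le> (k + 1 + r1 * (k - 1) - r1) div 2 + (k - 1 + r2 * (k - 2) - r2) div 2"
      using r(2) W(3,5) by simp
    then show False using arith_H2e[OF k2 True r(1)] by blast
  qed
qed


lemma H2d_free:
  fixes b :: int
  assumes tree: "is_tree V E" and col: "colour_classes V E A B" and p3: "p \<ge> 3"
    and k2: "2 \<le> k" and degA: "\<forall>x\<in>A. k \<le> deg E x" and a: "a = card A" and Ane: "A \<noteq> {}"
    and A0: "A0 = {x \<in> A. deg E x = k}" and B0: "B0 = {y \<in> B. card (nbrs E y \<inter> A0) \<ge> 2}"
    and odd: "odd k" and b1: "1 \<le> b" and bmin: "B0 \<noteq> {} \<longrightarrow> b + 2 = int (Min (deg E ` B0))"
    and H: "H2d n p a (nat (b - 1)) k VG EG"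
  shows "blowup_free V E p VG EG"
  unfolding blowup_free_def
proof
  assume sub: "subgraph_of (blowup_V V E p) (blowup_E V E p) VG EG"
  have H': "in_family (\<lambda>X EXX. almost_regular (nat (b - 1)) X EXX) (emb_L2 k) n p a VG EG"
    using H unfolding H2d_def .
  have topE: "\<forall>X EXX. (\<lambda>X EXX. almost_regular (nat (b - 1)) X EXX) X EXX \<longrightarrow> (\<forall>e\<in>EXX. e \<subseteq> X)"
    unfolding almost_regular_def using graph_sub by blast
  obtain f X EXX C1 C2 x1 x2 y where C: "core V E A B p VG EG X C1 C2 f"
      and top: "almost_regular (nat (b - 1)) X EXX"
      and topE2: "\<forall>u\<in>X. \<forall>v\<in>X. {u, v} \<in> EG \<longrightarrow> {u, v} \<in> EXX"
      and r: "x1 \<in> A" "x2 \<in> A" "x1 \<noteq> x2" "deg E x1 = k" "deg E x2 = k" "y \<in> B"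
         "{x1, y} \<in> E" "{x2, y} \<in> E" "core.phi f y \<in> X" "\<forall>x\<in>A - {x1, x2}. core.phi f x \<in> X"
    using L2odd_ystruct[OF tree col p3 k2 degA a Ane odd H' topE sub] by blast
  have yB0: "y \<in> B0" using y_in_B0[OF tree A0 B0 r(1-8)] .
  have finB0: "finite B0" using core.finB[OF C] B0 by simp
  have "Min (deg E ` B0) \<le> deg E y" using yB0 finB0 by simp
  then have degy: "b + 2 \<le> int (deg E y)" using bmin yB0 by auto
  define phi where "phi = core.phi f"
  define N' where "N' = nbrs E y - {x1, x2}"
  have gE: "is_graph V E" using tree unfolding is_tree_def by simp
  have yV: "y \<in> V" using r(6) core.AB[OF C] by blast
  have nbV: "nbrs E y \<subseteq> V" unfolding nbrs_def using graph_edge_neq(2)[OF gE] by blast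
  have finnb: "finite (nbrs E y)" using nbV gE unfolding is_graph_def using finite_subset by blast
  have gX: "is_graph X EXX" using top unfolding almost_regular_def by simp
  have maps: "phi ` N' \<subseteq> nbrs EXX (phi y)"
  proof
    fix z assume "z \<in> phi ` N'"
    then obtain x where x: "x \<in> N'" "z = phi x" by blast
    have eE: "{x, y} \<in> E" using x unfolding N'_def nbrs_def by blast
    obtain u v where uv: "{x, y} = {u, v}" "u \<in> A" "v \<in> B" using core.edge_AB[OF C eE] by metis
    have "x \<in> A"
    proof (cases "x = u")
      case True then show ?thesis using uv by simp
    next
      case False
      then have "x = v" "y = u" using uv(1) by (auto simp: doubleton_eq_iff)
      then show ?thesis using uv r(6) core.AB(2)[OF C] by blast
    qed
    then have px: "phi x \<in> X" using r(10) x unfolding N'_def phi_def by blast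
    have xV: "x \<in> V" using \<open>x \<in> A\<close> core.AB[OF C] by blast
    have "x \<noteq> y" using \<open>x \<in> A\<close> r(6) core.AB(2)[OF C] by blast
    then have ne: "phi x \<noteq> phi y" using core.phi_inj[OF C] xV yV unfolding phi_def by (meson inj_onD)
    have "{phi x, phi y} \<in> EG"
    proof -
      have "core.phi f x \<in> core.Q p f {x, y}" "core.phi f y \<in> core.Q p f {x, y}"
        using core.phi_Q[OF C eE] by auto
      then show ?thesis using core.Q_clique[OF C eE] ne unfolding phi_def by blast
    qed
    then have "{phi x, phi y} \<in> EXX" using topE2 px r(9) unfolding phi_def by blast
    then show "z \<in> nbrs EXX (phi y)" using x unfolding nbrs_def by simp
  qed
  have "nbrs EXX (phi y) \<subseteq> X" unfolding nbrs_def using graph_edge_neq(2)[OF gX] by blast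
  then have finX: "finite (nbrs EXX (phi y))" using gX unfolding is_graph_def using finite_subset by blast
  have "card N' = card (phi ` N')"
    using core.phi_inj[OF C] nbV unfolding N'_def phi_def by (metis Diff_subset card_image inj_on_subset subset_trans)
  also have "\<dots> \<le> deg EXX (phi y)" unfolding deg_def using maps finX by (rule card_mono[rotated])
  also have "\<dots> \<le> nat (b - 1)" using top r(9) unfolding almost_regular_def phi_def by fastforce
  finally have c1: "card N' \<le> nat (b - 1)" .
  have "card (nbrs E y) - card {x1, x2} \<le> card N'" unfolding N'_def by (rule diff_card_le_card_Diff) simp
  then have "deg E y - 2 \<le> card N'" using r(3) unfolding deg_def by simp
  then have "int (deg E y) - 2 \<le> b - 1" using c1 b1 by linarith
  then show False using degy by linarith
qed


theorem lemma2p6: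
  fixes V A B A0 B0 :: "'a set" and E :: "'a set set" and p k a :: nat and b c :: int
  assumes "p \<ge> 3"
    and "is_tree V E"
    and "colour_classes V E A B"
    and "card A \<le> card B"
    and "A \<noteq> {}"
    and "k = Min (deg E ` A)"
    and "k \<ge> 2"
    and "A0 = {x \<in> A. deg E x = k}"
    and "B0 = {y \<in> B. card (nbrs E y \<inter> A0) \<ge> 2}"
    and "a = card A"
    and "B0 \<noteq> {} \<longrightarrow> b + 2 = int (Min (deg E ` B0))"
    and "c = int a - 1 - \<lceil>real (k - 1) / real (a - 1)\<rceil>"
  shows
    "(even k \<longrightarrow> (\<forall>n (VG :: 'b set) EG. n \<ge> a \<and> (H1 n p a k VG EG \<or> H2 n p a k VG EG)
        \<longrightarrow> blowup_free V E p VG EG)) \<and>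
     (odd k \<and> B0 = {} \<longrightarrow> (\<forall>n (VG :: 'b set) EG. n \<ge> a \<and> H2 n p a k VG EG
        \<longrightarrow> blowup_free V E p VG EG)) \<and>
     (odd k \<and> B0 \<noteq> {} \<and> (b = 0 \<or> (0 < b \<and> b < c)) \<longrightarrow>
        (\<forall>n (VG :: 'b set) EG. n \<ge> a \<and> H1 n p a k VG EG \<longrightarrow> blowup_free V E p VG EG)) \<and>
     (odd k \<and> B0 \<noteq> {} \<and> b > max 0 c \<longrightarrow>
        (\<forall>n (VG :: 'b set) EG. n \<ge> a \<and> H2d n p a (nat (b - 1)) k VG EG
           \<longrightarrow> blowup_free V E p VG EG)) \<and>
     (odd k \<and> B0 \<noteq> {} \<and> b = c \<and> c > 0 \<longrightarrow>
        (\<forall>n (VG :: 'b set) EG. n \<ge> a \<and> (H1 n p a k VG EG \<or> H2d n p a (nat (b - 1)) k VG EG)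
           \<longrightarrow> blowup_free V E p VG EG))"
proof -
  note p3 = assms(1) and tree = assms(2) and col = assms(3) and Ane = assms(5) and kdef = assms(6)
    and k2 = assms(7) and A0 = assms(8) and B0 = assms(9) and a = assms(10) and bmin = assms(11)
  have gE: "is_graph V E" using tree unfolding is_tree_def by simp
  have "A \<subseteq> V" using col unfolding colour_classes_def by blast
  then have finA: "finite A" using gE unfolding is_graph_def using finite_subset by blast
  have degA: "\<forall>x\<in>A. k \<le> deg E x" using finA kdef by simp
  have F1: "blowup_free V E p VG EG" if "H1 n p a k VG EG" for n and VG :: "'b set" and EG
    using H1_free[OF tree col p3 k2 degA a Ane that] .
  have F2: "blowup_free V E p VG EG" if "even k \<or> B0 = {}" "H2 n p a k VG EG" for n and VG :: "'b set" and EG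
    using H2_free[OF tree col p3 k2 degA a Ane A0 B0 that] .
  have F3: "blowup_free V E p VG EG" if "odd k" "1 \<le> b" "H2d n p a (nat (b - 1)) k VG EG" for n and VG :: "'b set" and EG
    using H2d_free[OF tree col p3 k2 degA a Ane A0 B0 that(1,2) bmin that(3)] .
  show ?thesis
  proof (intro conjI impI allI)
    fix n and VG :: "'b set" and EG
    assume "even k" "a \<le> n \<and> (H1 n p a k VG EG \<or> H2 n p a k VG EG)"
    then show "blowup_free V E p VG EG" using F1 F2 by blast
  next
    fix n and VG :: "'b set" and EG
    assume "odd k \<and> B0 = {}" "a \<le> n \<and> H2 n p a k VG EG"
    then show "blowup_free V E p VG EG" using F2 by blast
  next
    fix n and VG :: "'b set" and EG
    assume "odd k \<and> B0 \<noteq> {} \<and> (b = 0 \<or> 0 < b \<and> b < c)" "a \<le> n \<and> H1 n p a k VG EG"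
    then show "blowup_free V E p VG EG" using F1 by blast
  next
    fix n and VG :: "'b set" and EG
    assume h: "odd k \<and> B0 \<noteq> {} \<and> max 0 c < b" "a \<le> n \<and> H2d n p a (nat (b - 1)) k VG EG"
    then have "1 \<le> b" by simp
    then show "blowup_free V E p VG EG" using F3 h by blast
  next
    fix n and VG :: "'b set" and EG
    assume h: "odd k \<and> B0 \<noteq> {} \<and> b = c \<and> 0 < c" "a \<le> n \<and> (H1 n p a k VG EG \<or> H2d n p a (nat (b - 1)) k VG EG)"
    then have "1 \<le> b" by simp
    then show "blowup_free V E p VG EG" using F1 F3 h by blast
  qed
qed


end
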